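(* Assume $n>R$. Then, for every realization of the sample, $$\sup_{f\in\mathcal F}\big|U_\Omega(f)-\bar U_\Omega(f)\big|\le\frac{2\mathcal BR}{n-R}+\sum_{r=1}^R\widehat\rho_r\sup_{f\in\mathcal F}\left|U_{\Omega_r}(f)-\frac{1}{N!}\sum_{\pi\in\Pi}U_{\Omega_r^\pi}(f)\right|.$$
   Context: Setup: Let $\mathcal X$ be a measurable space, $R\ge2$, $\rho=(\rho_1,\dots,\rho_R)$ a probability vector with all $\rho_r>0$, and $\mathcal D_1,\dots,\mathcal D_R$ distributions on $\mathcal X$; $\bar{\mathcal D}:=\sum_r\rho_r\mathcal D_r$. A labeled sample consists of $N$ i.i.d. pairs $(X_j,Y_j)$ with $\mathbb P(Y_j=r)=\rho_r$ and $X_j\mid Y_j=r\sim\mathcal D_r$; $S=(X_1,\dots,X_N)$, $N_r=|\{j:Y_j=r\}|$, $\widehat\rho_r=N_r/N$. Fix an integer $k\ge1$. $\mathcal F$ is a class of maps $f:\mathcal X\to\mathbb R^d$, $\phi:\mathbb R^k\to\mathbb R_+$, and $\ell_{\phi,f}(x,x^+,x_1^-,\dots,x_k^-):=\phi\big((f(x)^\top[f(x^+)-f(x_i^-)])_{i=1}^k\big)$, with $0\le\ell_{\phi,f}\le\mathcal B$ for all $f\in\mathcal F$. Natural estimator: $\Omega_r$ is the set of index tuples $(a,b,c_1,\dots,c_k)$ of pairwise distinct indices in $[N]$ with $Y_a=Y_b=r$ (negatives $c_i$ arbitrary); $U_{\Omega_r}(f)$ is the average of $\ell_{\phi,f}(X_a,X_b,X_{c_1},\dots,X_{c_k})$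 over $\Omega_r$ ($:=0$ if empty); $U_\Omega(f):=\sum_r\widehat\rho_rU_{\Omega_r}(f)$. Auxiliary estimator: $n:=2\lfloor N/(k+2)\rfloor$; $\Pi$ is the set of permutations of $[N]$; for $\pi\in\Pi$, $I_\pi=\{\pi(1),\dots,\pi(n)\}$, $n_r^\pi:=|\{j\in I_\pi:Y_j=r\}|$, $\Omega_r^\pi$ is the set of tuples $(a,b,c_1,\dots,c_k)$ of pairwise distinct indices with $a,b\in I_\pi$, $Y_a=Y_b=r$, $c_i\notin I_\pi$; $U_{\Omega_r^\pi}(f)$ is the corresponding average ($:=0$ if empty); $\omega_r^\pi:=\lfloor n_r^\pi/2\rfloor/\sum_q\lfloor n_q^\pi/2\rfloor$ ($:=0$ if denominator $0$); $\bar U_\Omega(f):=\frac1{N!}\sum_{\pi\in\Pi}\sum_r\omega_r^\pi U_{\Omega_r^\pi}(f)$. *)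

theory Defs
  imports "HOL-Analysis.Analysis" "HOL-Combinatorics.Permutations"
begin

text \<open>Sample indices are 0-based: [N] is rendered as {0..<N}. Labels Y j take values in {1..R}.
  A negative tuple (c_1,...,c_k) is a list of length k.\<close>

definition loss :: "(real list \<Rightarrow> real) \<Rightarrow> ('x \<Rightarrow> 'v::euclidean_space) \<Rightarrow> 'x \<Rightarrow> 'x \<Rightarrow> 'x list \<Rightarrow> real" where
  "loss phi f x xp xs = phi (map (\<lambda>z. inner (f x) (f xp - f z)) xs)"

definition avg_loss :: "(real list \<Rightarrow> real) \<Rightarrow> ('x \<Rightarrow> 'v::euclidean_space) \<Rightarrow> (nat \<Rightarrow> 'x)
    \<Rightarrow> (nat \<times> nat \<times> nat list) set \<Rightarrow> real" where
  "avg_loss phi f X S = (if S = {} then 0 else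
     (\<Sum>(a,b,c)\<in>S. loss phi f (X a) (X b) (map X c)) / real (card S))"

definition Omega_r :: "nat \<Rightarrow> nat \<Rightarrow> (nat \<Rightarrow> nat) \<Rightarrow> nat \<Rightarrow> (nat \<times> nat \<times> nat list) set" where
  "Omega_r N k Y r = {(a,b,c). a < N \<and> b < N \<and> length c = k \<and> set c \<subseteq> {0..<N}
      \<and> distinct (a # b # c) \<and> Y a = r \<and> Y b = r}"

definition rho_hat :: "nat \<Rightarrow> (nat \<Rightarrow> nat) \<Rightarrow> nat \<Rightarrow> real" where
  "rho_hat N Y r = real (card {j. j < N \<and> Y j = r}) / real N"

definition U_Omega :: "(real list \<Rightarrow> real) \<Rightarrow> ('x \<Rightarrow> 'v::euclidean_space) \<Rightarrow> nat \<Rightarrow> nat \<Rightarrow> nat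
    \<Rightarrow> (nat \<Rightarrow> 'x) \<Rightarrow> (nat \<Rightarrow> nat) \<Rightarrow> real" where
  "U_Omega phi f N k R X Y = (\<Sum>r=1..R. rho_hat N Y r * avg_loss phi f X (Omega_r N k Y r))"

definition n_aux :: "nat \<Rightarrow> nat \<Rightarrow> nat" where
  "n_aux N k = 2 * (N div (k + 2))"

text \<open>I_pi = {pi(1),...,pi(n)} in 1-based notation, i.e. pi ` {0..<n} here.\<close>
definition I_pi :: "nat \<Rightarrow> nat \<Rightarrow> (nat \<Rightarrow> nat) \<Rightarrow> nat set" where
  "I_pi N k \<pi> = \<pi> ` {0..<n_aux N k}"

definition n_r_pi :: "nat \<Rightarrow> nat \<Rightarrow> (nat \<Rightarrow> nat) \<Rightarrow> (nat \<Rightarrow> nat) \<Rightarrow> nat \<Rightarrow> nat" where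
  "n_r_pi N k Y \<pi> r = card {j \<in> I_pi N k \<pi>. Y j = r}"

definition Omega_r_pi :: "nat \<Rightarrow> nat \<Rightarrow> (nat \<Rightarrow> nat) \<Rightarrow> (nat \<Rightarrow> nat) \<Rightarrow> nat \<Rightarrow> (nat \<times> nat \<times> nat list) set" where
  "Omega_r_pi N k Y \<pi> r = {(a,b,c). a \<in> I_pi N k \<pi> \<and> b \<in> I_pi N k \<pi> \<and> length c = k
      \<and> set c \<subseteq> {0..<N} - I_pi N k \<pi> \<and> distinct (a # b # c) \<and> Y a = r \<and> Y b = r}"

definition omega_r_pi :: "nat \<Rightarrow> nat \<Rightarrow> nat \<Rightarrow> (nat \<Rightarrow> nat) \<Rightarrow> (nat \<Rightarrow> nat) \<Rightarrow> nat \<Rightarrow> real" where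
  "omega_r_pi N k R Y \<pi> r =
     (let D = (\<Sum>q=1..R. n_r_pi N k Y \<pi> q div 2) in
      if D = 0 then 0 else real (n_r_pi N k Y \<pi> r div 2) / real D)"

definition U_bar :: "(real list \<Rightarrow> real) \<Rightarrow> ('x \<Rightarrow> 'v::euclidean_space) \<Rightarrow> nat \<Rightarrow> nat \<Rightarrow> nat
    \<Rightarrow> (nat \<Rightarrow> 'x) \<Rightarrow> (nat \<Rightarrow> nat) \<Rightarrow> real" where
  "U_bar phi f N k R X Y = (1 / fact N) * (\<Sum>\<pi>\<in>{\<pi>. \<pi> permutes {0..<N}}.
      \<Sum>r=1..R. omega_r_pi N k R Y \<pi> r * avg_loss phi f X (Omega_r_pi N k Y \<pi> r))"

definition U_perm_avg :: "(real list \<Rightarrow> real) \<Rightarrow> ('x \<Rightarrow> 'v::euclidean_space) \<Rightarrow> nat \<Rightarrow> nat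
    \<Rightarrow> (nat \<Rightarrow> 'x) \<Rightarrow> (nat \<Rightarrow> nat) \<Rightarrow> nat \<Rightarrow> real" where
  "U_perm_avg phi f N k X Y r = (1 / fact N) * (\<Sum>\<pi>\<in>{\<pi>. \<pi> permutes {0..<N}}.
      avg_loss phi f X (Omega_r_pi N k Y \<pi> r))"

end

theory Submission
  imports Defs
begin

definition Lt :: "(real list \<Rightarrow> real) \<Rightarrow> ('x \<Rightarrow> 'v::euclidean_space) \<Rightarrow> (nat \<Rightarrow> 'x) \<Rightarrow> nat \<times> nat \<times> nat list \<Rightarrow> real" where
  "Lt phi f X t = (case t of (a,b,c) \<Rightarrow> loss phi f (X a) (X b) (map X c))"

definition Om :: "nat \<Rightarrow> nat set \<Rightarrow> nat set \<Rightarrow> (nat \<times> nat \<times> nat list) set" where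
  "Om k P Q = {(a,b,c). a \<in> P \<and> b \<in> P \<and> length c = k \<and> set c \<subseteq> Q \<and> distinct (a # b # c)}"

definition prs :: "nat set \<Rightarrow> (nat \<times> nat) set" where
  "prs P = {(a,b). a \<in> P \<and> b \<in> P \<and> a \<noteq> b}"

definition lsts :: "nat \<Rightarrow> nat set \<Rightarrow> nat list set" where
  "lsts k Q = {c. length c = k \<and> set c \<subseteq> Q \<and> distinct c}"

lemma avg_eq: "avg_loss phi f X S = sum (Lt phi f X) S / card S"
  unfolding avg_loss_def Lt_def by (simp add: case_prod_beta')

lemma finite_lsts: "finite Q \<Longrightarrow> finite (lsts k Q)"
  unfolding lsts_def
  by (rule finite_subset[OF _ finite_lists_length_eq[of Q k]]) auto

lemma card_prs: "finite P \<Longrightarrow> card (prs P) = card P * (card P - 1)"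
proof -
  assume fP: "finite P"
  have "prs P = (P \<times> P) - (\<lambda>a. (a,a)) ` P" unfolding prs_def by auto
  moreover have "card ((\<lambda>a. (a,a)) ` P) = card P" by (rule card_image) (auto intro: inj_onI)
  moreover have "(\<lambda>a. (a,a)) ` P \<subseteq> P \<times> P" by auto
  ultimately have "card (prs P) = card P * card P - card P"
    using fP by (simp add: card_Diff_subset card_cartesian_product finite_cartesian_product)
  then show ?thesis by (simp add: diff_mult_distrib2)
qed

lemma Om_img: "P \<inter> Q = {} \<Longrightarrow> Om k P Q = (\<lambda>((a,b),c). (a,b,c)) ` (prs P \<times> lsts k Q)"
  unfolding Om_def prs_def lsts_def by (auto simp: image_iff) 

lemma card_Om: assumes "finite P" "finite Q" "P \<inter> Q = {}"
  shows "card (Om k P Q) = card P * (card P - 1) * card (lsts k Q)"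
proof -
  have "inj_on (\<lambda>((a,b),c). (a::nat,b::nat,c::nat list)) (prs P \<times> lsts k Q)"
    by (auto intro!: inj_onI)
  then show ?thesis using assms
    by (simp add: Om_img card_image card_cartesian_product card_prs)
qed

lemma finite_Om: "finite P \<Longrightarrow> finite Q \<Longrightarrow> finite (Om k P Q)"
proof -
  assume a: "finite P" "finite Q"
  have "Om k P Q \<subseteq> P \<times> P \<times> lsts k Q" unfolding Om_def lsts_def by auto
  then show ?thesis using a finite_lsts by (meson finite_SigmaI finite_subset)
qed


lemma avg_bounds:
  assumes "\<And>t. t \<in> S \<Longrightarrow> 0 \<le> Lt phi f X t \<and> Lt phi f X t \<le> B" "0 \<le> B"
  shows "0 \<le> avg_loss phi f X S \<and> avg_loss phi f X S \<le> B"
proof (cases "finite S \<and> S \<noteq> {}")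
  case True
  have "sum (Lt phi f X) S \<le> of_nat (card S) * B"
    using sum_bounded_above[of S "Lt phi f X" B] assms by auto
  moreover have "0 \<le> sum (Lt phi f X) S" using assms by (auto intro: sum_nonneg)
  moreover have "card S > 0" using True card_gt_0_iff by blast
  ultimately show ?thesis by (auto simp: avg_eq field_simps)
next
  case False
  then have "card S = 0" by auto
  then show ?thesis using assms by (simp add: avg_eq)
qed

lemma Om_Lt_bounds:
  assumes Lb: "\<And>x xp xs. length xs = k \<Longrightarrow> 0 \<le> loss phi f x xp xs \<and> loss phi f x xp xs \<le> B"
  shows "t \<in> Om k P Q \<Longrightarrow> 0 \<le> Lt phi f X t \<and> Lt phi f X t \<le> B"
  unfolding Om_def Lt_def using Lb by auto

lemma U_bounds:
  assumes Lb: "\<And>x xp xs. length xs = k \<Longrightarrow> 0 \<le> loss phi f x xp xs \<and> loss phi f x xp xs \<le> B"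
  shows "0 \<le> avg_loss phi f X (Om k P Q) \<and> avg_loss phi f X (Om k P Q) \<le> B"
proof -
  have "0 \<le> B" using Lb[of "replicate k undefined" undefined undefined] by auto
  then show ?thesis using avg_bounds Om_Lt_bounds[OF Lb] by blast
qed

lemma U_formula:
  assumes "finite P" "finite Q" "P \<inter> Q = {}"
  shows "avg_loss phi f X (Om k P Q) = sum (Lt phi f X) (Om k P Q) /
           (real (card P) * (real (card P) - 1) * real (card (lsts k Q)))"
proof (cases "card P = 0")
  case True
  then show ?thesis using assms by (simp add: avg_eq card_Om)
next
  case False
  then have "real (card P - Suc 0) = real (card P) - 1" by (simp add: of_nat_diff)
  then show ?thesis using assms by (simp add: avg_eq card_Om)
qed

lemma Om_minus: "Om k (P - {x}) Q = {t \<in> Om k P Q. fst t \<noteq> x \<and> fst (snd t) \<noteq> x}"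
  unfolding Om_def by auto

lemma loo:
  assumes fP: "finite P" and fQ: "finite Q" and dj: "P \<inter> Q = {}"
  shows "(\<Sum>x\<in>P. avg_loss phi f X (Om k P Q) - avg_loss phi f X (Om k (P - {x}) Q))
    = (if card P = 2 then 2 * avg_loss phi f X (Om k P Q) else 0)"
proof -
  define m where "m = card P"
  define T where "T = real (card (lsts k Q))"
  define S where "S = sum (Lt phi f X) (Om k P Q)"
  have fO: "finite (Om k P Q)" using finite_Om fP fQ by blast
  have UP: "avg_loss phi f X (Om k P Q) = S / (real m * (real m - 1) * T)"
    unfolding S_def m_def T_def using U_formula[OF fP fQ dj] .
  have Ux: "avg_loss phi f X (Om k (P - {x}) Q) =
      sum (Lt phi f X) (Om k (P - {x}) Q) / ((real m - 1) * (real m - 2) * T)" if "x \<in> P" for x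
  proof -
    have c1: "card (P - {x}) = m - 1" using that fP m_def by simp
    have "m > 0" using that fP unfolding m_def by (auto simp: card_gt_0_iff)
    then have m1: "m \<ge> 1" by simp
    have e1: "real (card (P - {x})) = real m - 1" using c1 m1 by (simp add: of_nat_diff)
    have e2: "real (card (P - {x})) - 1 = real m - 2" using e1 by simp
    have "avg_loss phi f X (Om k (P - {x}) Q) = sum (Lt phi f X) (Om k (P - {x}) Q) /
           (real (card (P - {x})) * (real (card (P - {x})) - 1) * real (card (lsts k Q)))"
    proof -
      have d: "(P - {x}) \<inter> Q = {}" using dj by auto
      have fx: "finite (P - {x})" using fP by auto
      show ?thesis using U_formula[OF fx fQ d] .
    qed
    then have "avg_loss phi f X (Om k (P - {x}) Q) = sum (Lt phi f X) (Om k (P - {x}) Q) /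
           ((real m - 1) * (real m - 1 - 1) * real (card (lsts k Q)))" unfolding e1 .
    then show ?thesis by (simp add: T_def)
  qed
  have Sx: "sum (Lt phi f X) (Om k (P - {x}) Q) =
      (\<Sum>t\<in>Om k P Q. if fst t \<noteq> x \<and> fst (snd t) \<noteq> x then Lt phi f X t else 0)" for x
    unfolding Om_minus using fO by (simp add: sum.inter_filter)
  have cardx: "card {x \<in> P. fst t \<noteq> x \<and> fst (snd t) \<noteq> x} = m - 2" if "t \<in> Om k P Q" for t
  proof -
    obtain a b c where t0: "t = (a,b,c)" by (cases t)
    then have t: "t = (a,b,c)" "a \<in> P" "b \<in> P" "a \<noteq> b"
      using that unfolding Om_def by auto
    have "{x \<in> P. fst t \<noteq> x \<and> fst (snd t) \<noteq> x} = P - {a,b}" using t by auto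
    then show ?thesis using t fP m_def by (simp add: card_Diff_subset)
  qed
  have m2: "m \<ge> 2" if "t \<in> Om k P Q" for t
  proof -
    obtain a b c where t0: "t = (a,b,c)" by (cases t)
    then have t: "t = (a,b,c)" "a \<in> P" "b \<in> P" "a \<noteq> b"
      using that unfolding Om_def by auto
    have "{a,b} \<subseteq> P" using t by auto
    then have "card {a,b} \<le> m" using fP m_def card_mono by blast
    then show ?thesis using t by simp
  qed
  have sumS: "(\<Sum>x\<in>P. sum (Lt phi f X) (Om k (P - {x}) Q)) = (real m - 2) * S"
  proof -
    have "(\<Sum>x\<in>P. sum (Lt phi f X) (Om k (P - {x}) Q)) =
        (\<Sum>t\<in>Om k P Q. \<Sum>x\<in>P. if fst t \<noteq> x \<and> fst (snd t) \<noteq> x then Lt phi f X t else 0)"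
      unfolding Sx by (rule sum.swap)
    also have "\<dots> = (\<Sum>t\<in>Om k P Q. Lt phi f X t * real (m - 2))"
    proof (rule sum.cong[OF refl])
      fix t assume t: "t \<in> Om k P Q"
      have "(\<Sum>x\<in>P. if fst t \<noteq> x \<and> fst (snd t) \<noteq> x then Lt phi f X t else 0)
          = (\<Sum>x\<in>{x \<in> P. fst t \<noteq> x \<and> fst (snd t) \<noteq> x}. Lt phi f X t)"
        by (rule sum.inter_filter[OF fP, symmetric])
      also have "\<dots> = Lt phi f X t * real (m - 2)" using cardx[OF t] by simp
      finally show "(\<Sum>x\<in>P. if fst t \<noteq> x \<and> fst (snd t) \<noteq> x then Lt phi f X t else 0)
          = Lt phi f X t * real (m - 2)" .
    qed
    also have "\<dots> = (\<Sum>t\<in>Om k P Q. Lt phi f X t * (real m - 2))"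
      by (rule sum.cong[OF refl]) (use m2 in \<open>simp add: of_nat_diff\<close>)
    also have "\<dots> = (real m - 2) * S" unfolding S_def sum_distrib_right[symmetric] by (simp add: mult.commute)
    finally show ?thesis .
  qed
  show ?thesis
  proof (cases "m \<ge> 3")
    case True
    have "(\<Sum>x\<in>P. avg_loss phi f X (Om k (P - {x}) Q)) =
        (\<Sum>x\<in>P. sum (Lt phi f X) (Om k (P - {x}) Q)) / ((real m - 1) * (real m - 2) * T)"
      using Ux by (simp add: sum_divide_distrib)
    also have "\<dots> = real m * avg_loss phi f X (Om k P Q)"
      unfolding sumS UP
    proof -
      have a: "real m - 2 \<noteq> 0" "real m - 1 \<noteq> 0" "real m \<noteq> 0" using True by auto
      show "(real m - 2) * S / ((real m - 1) * (real m - 2) * T) = real m * (S / (real m * (real m - 1) * T))"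
      proof (cases "T = 0")
        case True then show ?thesis by simp
      next
        case False
        have "(real m - 2) * S / ((real m - 1) * (real m - 2) * T) = (real m - 2) * S / ((real m - 2) * ((real m - 1) * T))"
          by (simp add: mult_ac)
        also have "\<dots> = S / ((real m - 1) * T)" using a(1) by (rule nonzero_mult_divide_mult_cancel_left)
        also have "\<dots> = real m * S / (real m * ((real m - 1) * T))" using a(3) by (rule nonzero_mult_divide_mult_cancel_left[symmetric])
        also have "\<dots> = real m * (S / (real m * (real m - 1) * T))" by (simp add: mult_ac)
        finally show ?thesis .
      qed
    qed
    finally show ?thesis using True m_def
      by (simp add: sum_subtractf)
  next
    case False
    show ?thesis
    proof (cases "m = 2")
      case True
      have "avg_loss phi f X (Om k (P - {x}) Q) = 0" if "x \<in> P" for x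
        using Ux[OF that] True by simp
      then show ?thesis using True m_def by (simp add: sum_subtractf)
    next
      case False
      with \<open>\<not> m \<ge> 3\<close> have "m = 0 \<or> m = 1" by auto
      then have "avg_loss phi f X (Om k P Q) = 0" using UP by auto
      moreover have "avg_loss phi f X (Om k (P - {x}) Q) = 0" if "x \<in> P" for x
      proof -
        have "m > 0" using that fP unfolding m_def by (auto simp: card_gt_0_iff)
        then have "m \<ge> 1" by simp
        then show ?thesis using Ux[OF that] \<open>m = 0 \<or> m = 1\<close> by auto
      qed
      ultimately show ?thesis using False m_def by (simp add: sum_subtractf)
    qed
  qed
qed


abbreviation "tau y x \<equiv> Transposition.transpose (y::nat) x"

lemma swap_map_in:
  assumes "P \<inter> Q = {}" "x \<notin> P" "x \<notin> Q" "y \<in> Q"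
    and abc: "(a,b,c) \<in> Om k P Q"
  shows "(a, b, map (tau y x) c) \<in> Om k P (insert x (Q - {y}))"
proof -
  have ab: "a \<in> P" "b \<in> P" "length c = k" "set c \<subseteq> Q" "distinct (a # b # c)" using abc unfolding Om_def by auto
  have ne: "a \<noteq> y" "b \<noteq> y" "a \<noteq> x" "b \<noteq> x" using ab assms by auto
  have e: "map (tau y x) (a # b # c) = a # b # map (tau y x) c" using ne by simp
  have "distinct (map (tau y x) (a # b # c))"
    using distinct_map[THEN iffD2, OF conjI[OF ab(5) inj_on_transpose]] .
  then have d: "distinct (a # b # map (tau y x) c)" unfolding e .
  have s: "set (map (tau y x) c) \<subseteq> insert x (Q - {y})"
  proof
    fix z assume "z \<in> set (map (tau y x) c)"
    then obtain w where w: "w \<in> set c" "z = tau y x w" by auto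
    then have "w \<in> Q" using ab(4) by auto
    moreover have "w \<noteq> x" using \<open>w \<in> Q\<close> assms(3) by auto
    ultimately show "z \<in> insert x (Q - {y})" using w by (cases "w = y") auto
  qed
  show ?thesis using ab(1,2,3) d s unfolding Om_def by simp
qed

lemma swap_map_in2:
  assumes "P \<inter> Q = {}" "x \<notin> P" "x \<notin> Q" "y \<in> Q"
    and abc: "(a,b,c) \<in> Om k P (insert x (Q - {y}))"
  shows "(a, b, map (tau y x) c) \<in> Om k P Q"
proof -
  have ab: "a \<in> P" "b \<in> P" "length c = k" "set c \<subseteq> insert x (Q - {y})" "distinct (a # b # c)"
    using abc unfolding Om_def by auto
  have ne: "a \<noteq> y" "b \<noteq> y" "a \<noteq> x" "b \<noteq> x" using ab assms by auto
  have e: "map (tau y x) (a # b # c) = a # b # map (tau y x) c" using ne by simp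
  have "distinct (map (tau y x) (a # b # c))"
    using distinct_map[THEN iffD2, OF conjI[OF ab(5) inj_on_transpose]] .
  then have d: "distinct (a # b # map (tau y x) c)" unfolding e .
  have s: "set (map (tau y x) c) \<subseteq> Q"
  proof
    fix z assume "z \<in> set (map (tau y x) c)"
    then obtain w where w: "w \<in> set c" "z = tau y x w" by auto
    then have "w \<in> insert x (Q - {y})" using ab(4) by auto
    then show "z \<in> Q" using w assms(4) by (cases "w = x") auto
  qed
  show ?thesis using ab(1,2,3) d s unfolding Om_def by simp
qed

definition gsw :: "nat \<Rightarrow> nat \<Rightarrow> nat \<times> nat \<times> nat list \<Rightarrow> nat \<times> nat \<times> nat list" where
  "gsw y x t = (fst t, fst (snd t), map (tau y x) (snd (snd t)))"

lemma gsw_gsw: "gsw y x (gsw y x t) = t"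
  unfolding gsw_def by (simp add: map_map comp_def)

lemma bij_swap_Om:
  assumes "P \<inter> Q = {}" "x \<notin> P" "x \<notin> Q" "y \<in> Q"
  shows "bij_betw (gsw y x) (Om k P Q) (Om k P (insert x (Q - {y})))"
proof (rule bij_betw_byWitness[where f' = "gsw y x"])
  show "\<forall>t\<in>Om k P Q. gsw y x (gsw y x t) = t" using gsw_gsw by blast
  show "\<forall>t\<in>Om k P (insert x (Q - {y})). gsw y x (gsw y x t) = t" using gsw_gsw by blast
  show "gsw y x ` Om k P Q \<subseteq> Om k P (insert x (Q - {y}))"
  proof
    fix t assume "t \<in> gsw y x ` Om k P Q"
    then obtain t' where t': "t' \<in> Om k P Q" "t = gsw y x t'" by auto
    obtain a b c where "t' = (a,b,c)" by (cases t')
    then show "t \<in> Om k P (insert x (Q - {y}))" using t' swap_map_in[OF assms] by (simp add: gsw_def)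
  qed
  show "gsw y x ` Om k P (insert x (Q - {y})) \<subseteq> Om k P Q"
  proof
    fix t assume "t \<in> gsw y x ` Om k P (insert x (Q - {y}))"
    then obtain t' where t': "t' \<in> Om k P (insert x (Q - {y}))" "t = gsw y x t'" by auto
    obtain a b c where "t' = (a,b,c)" by (cases t')
    then show "t \<in> Om k P Q" using t' swap_map_in2[OF assms] by (simp add: gsw_def)
  qed
qed


lemma gsw_fix: "t \<in> Om k P Q \<Longrightarrow> x \<notin> Q \<Longrightarrow> y \<notin> set (snd (snd t)) \<Longrightarrow> gsw y x t = t"
proof -
  assume a: "t \<in> Om k P Q" "x \<notin> Q" "y \<notin> set (snd (snd t))"
  have "set (snd (snd t)) \<subseteq> Q" using a(1) unfolding Om_def by auto
  have "tau y x w = w" if "w \<in> set (snd (snd t))" for w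
  proof -
    have "w \<noteq> x" "w \<noteq> y" using that a \<open>set (snd (snd t)) \<subseteq> Q\<close> by auto
    then show ?thesis by simp
  qed
  then have "map (tau y x) (snd (snd t)) = snd (snd t)" by (simp add: map_idI)
  then show ?thesis unfolding gsw_def by simp
qed

lemma neg_sum:
  assumes Lb: "\<And>x xp xs. length xs = k \<Longrightarrow> 0 \<le> loss phi f x xp xs \<and> loss phi f x xp xs \<le> B"
    and fP: "finite P" and fQ: "finite Q" and dj: "P \<inter> Q = {}" and xP: "x \<notin> P" and xQ: "x \<notin> Q"
  shows "(\<Sum>y\<in>Q. \<bar>avg_loss phi f X (Om k P Q) - avg_loss phi f X (Om k P (insert x (Q - {y})))\<bar>) \<le> B * real k"
proof -
  define Om0 where "Om0 = Om k P Q"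
  define C where "C = real (card Om0)"
  define L where "L = Lt phi f X"
  have B0: "0 \<le> B" using Lb[of "replicate k undefined" undefined undefined] by auto
  have fO: "finite Om0" unfolding Om0_def using finite_Om fP fQ by blast
  have C0: "C \<ge> 0" unfolding C_def by simp
  have Lbd: "0 \<le> L t \<and> L t \<le> B" if "t \<in> Om k P Q'" for t Q'
    unfolding L_def using Om_Lt_bounds[OF Lb that] .
  have each: "\<bar>avg_loss phi f X Om0 - avg_loss phi f X (Om k P (insert x (Q - {y})))\<bar>
      \<le> (\<Sum>t\<in>Om0. if y \<in> set (snd (snd t)) then B else 0) / C" if y: "y \<in> Q" for y
  proof -
    have bij: "bij_betw (gsw y x) Om0 (Om k P (insert x (Q - {y})))"
      unfolding Om0_def using bij_swap_Om[OF dj xP xQ y] .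
    have s1: "sum L (Om k P (insert x (Q - {y}))) = (\<Sum>t\<in>Om0. L (gsw y x t))"
      using sum.reindex_bij_betw[OF bij, of L] by simp
    have c1: "card (Om k P (insert x (Q - {y}))) = card Om0"
      using bij_betw_same_card[OF bij] by simp
    have "avg_loss phi f X Om0 - avg_loss phi f X (Om k P (insert x (Q - {y})))
        = (\<Sum>t\<in>Om0. L t - L (gsw y x t)) / C"
      unfolding avg_eq L_def[symmetric] s1 c1 C_def by (simp add: sum_subtractf diff_divide_distrib)
    moreover have "\<bar>\<Sum>t\<in>Om0. L t - L (gsw y x t)\<bar> \<le> (\<Sum>t\<in>Om0. if y \<in> set (snd (snd t)) then B else 0)"
    proof -
      have "\<bar>\<Sum>t\<in>Om0. L t - L (gsw y x t)\<bar> \<le> (\<Sum>t\<in>Om0. \<bar>L t - L (gsw y x t)\<bar>)" by (rule sum_abs)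
      also have "\<dots> \<le> (\<Sum>t\<in>Om0. if y \<in> set (snd (snd t)) then B else 0)"
      proof (rule sum_mono)
        fix t assume t: "t \<in> Om0"
        show "\<bar>L t - L (gsw y x t)\<bar> \<le> (if y \<in> set (snd (snd t)) then B else 0)"
        proof (cases "y \<in> set (snd (snd t))")
          case True
          have "gsw y x t \<in> Om k P (insert x (Q - {y}))" using bij t by (meson bij_betw_apply)
          then have "0 \<le> L (gsw y x t) \<and> L (gsw y x t) \<le> B" using Lbd by blast
          moreover have "0 \<le> L t \<and> L t \<le> B" using Lbd t unfolding Om0_def by blast
          ultimately show ?thesis using True by auto
        next
          case False
          then have "gsw y x t = t" using gsw_fix t xQ unfolding Om0_def by blast
          then show ?thesis using False by simp
        qed
      qed
      finally show ?thesis .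
    qed
    ultimately show ?thesis using C0 by (simp add: divide_right_mono)
  qed
  have "(\<Sum>y\<in>Q. \<bar>avg_loss phi f X Om0 - avg_loss phi f X (Om k P (insert x (Q - {y})))\<bar>)
      \<le> (\<Sum>y\<in>Q. (\<Sum>t\<in>Om0. if y \<in> set (snd (snd t)) then B else 0) / C)"
    using each by (rule sum_mono)
  also have "\<dots> = (\<Sum>t\<in>Om0. \<Sum>y\<in>Q. if y \<in> set (snd (snd t)) then B else 0) / C"
    by (simp add: sum_divide_distrib[symmetric] sum.swap[of _ Q Om0])
  also have "\<dots> = (\<Sum>t\<in>Om0. B * real k) / C"
  proof -
    have "(\<Sum>y\<in>Q. if y \<in> set (snd (snd t)) then B else 0) = B * real k" if t: "t \<in> Om0" for t
    proof -
      have tt: "length (snd (snd t)) = k" "set (snd (snd t)) \<subseteq> Q" "distinct (snd (snd t))"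
        using t unfolding Om0_def Om_def by auto
      have "(\<Sum>y\<in>Q. if y \<in> set (snd (snd t)) then B else 0) = (\<Sum>y\<in>{y\<in>Q. y \<in> set (snd (snd t))}. B)"
        by (rule sum.inter_filter[OF fQ, symmetric])
      also have "{y\<in>Q. y \<in> set (snd (snd t))} = set (snd (snd t))" using tt by auto
      also have "card (set (snd (snd t))) = k" using tt distinct_card by metis
      then have "(\<Sum>y\<in>set (snd (snd t)). B) = B * real k" by simp
      finally show ?thesis .
    qed
    then show ?thesis by simp
  qed
  also have "\<dots> \<le> B * real k"
  proof (cases "C = 0")
    case True then show ?thesis using B0 by simp
  next
    case False
    then show ?thesis unfolding C_def by simp
  qed
  finally show ?thesis unfolding Om0_def .
qed


lemma sum_mod2: "finite A \<Longrightarrow> (\<Sum>r\<in>A. m r) = 2 * (\<Sum>r\<in>A. m r div 2) + card {r\<in>A. odd (m r)}"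
proof (induction A rule: finite_induct)
  case empty then show ?case by simp
next
  case (insert a A)
  have c: "{r \<in> insert a A. odd (m r)} = (if odd (m a) then insert a {r\<in>A. odd (m r)} else {r\<in>A. odd (m r)})"
    by auto
  have "a \<notin> {r\<in>A. odd (m r)}" using insert by auto
  moreover have "finite {r\<in>A. odd (m r)}" using insert by auto
  ultimately have c2: "card {r \<in> insert a A. odd (m r)} = (if odd (m a) then 1 else 0) + card {r\<in>A. odd (m r)}"
    unfolding c by auto
  have "m a = 2 * (m a div 2) + (if odd (m a) then 1 else 0)" by presburger
  then show ?case using insert c2 by simp
qed

lemma omega_part:
  fixes m :: "nat \<Rightarrow> nat" and U :: "nat \<Rightarrow> real"
  assumes fA: "finite A" and n: "n = (\<Sum>r\<in>A. m r)" and Od: "Od = card {r\<in>A. odd (m r)}"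
    and lt: "Od < n" and Ub: "\<And>r. r \<in> A \<Longrightarrow> 0 \<le> U r \<and> U r \<le> B"
  shows "\<bar>\<Sum>r\<in>A. (real (m r) / real n - real (m r div 2) / real (\<Sum>q\<in>A. m q div 2)) * U r\<bar>
     \<le> B * real Od / (real n - real Od)"
proof -
  define D where "D = (\<Sum>q\<in>A. m q div 2)"
  have nD: "n = 2 * D + Od" unfolding n D_def Od by (rule sum_mod2[OF fA])
  have rD: "real D = (real n - real Od) / 2" using nD by simp
  have npos: "real n > 0" using lt by simp
  have nOd: "real n - real Od > 0" using lt by simp
  define a where "a r = real (m r) / real n - real (m r div 2) / real D" for r
  define e where "e r = (if odd (m r) then 1 else 0 :: real)" for r
  have me: "real (m r div 2) = (real (m r) - e r) / 2" for r
  proof -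
    have "real (m r) = 2 * real (m r div 2) + e r"
    proof (cases "odd (m r)")
      case True
      then have h: "m r = 2 * (m r div 2) + 1" by presburger
      have h1: "real (m r) = real (2 * (m r div 2) + 1)" using arg_cong[OF h, of real] .
      have h2: "real (2 * (m r div 2) + 1) = 2 * real (m r div 2) + 1" by simp
      have "e r = 1" using True unfolding e_def by simp
      then show ?thesis using h1 h2 by linarith
    next
      case False
      then have h: "m r = 2 * (m r div 2)" by presburger
      have "real (m r) = real (2 * (m r div 2))" using arg_cong[OF h, of real] .
      then show ?thesis using False unfolding e_def by simp
    qed
    then show ?thesis by simp
  qed
  have aform: "a r = (real n * e r - real Od * real (m r)) / (real n * (real n - real Od))" for r
    unfolding a_def me rD using npos nOd by (simp add: field_simps)
  have sum_e: "(\<Sum>r\<in>A. e r) = real Od"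
  proof -
    have "A \<inter> {r. odd (m r)} = {r\<in>A. odd (m r)}" by auto
    then show ?thesis unfolding e_def Od by (simp add: sum.If_cases fA)
  qed
  have sum_m: "(\<Sum>r\<in>A. real (m r)) = real n" unfolding n by simp
  have sum_a: "(\<Sum>r\<in>A. a r) = 0"
  proof -
    have "(\<Sum>r\<in>A. a r) = (\<Sum>r\<in>A. real n * e r - real Od * real (m r)) / (real n * (real n - real Od))"
      unfolding aform by (simp add: sum_divide_distrib)
    also have "(\<Sum>r\<in>A. real n * e r - real Od * real (m r)) = real n * real Od - real Od * real n"
      by (simp add: sum_subtractf sum_distrib_left[symmetric] sum_e sum_m)
    finally show ?thesis by simp
  qed
  have abs_a: "\<bar>a r\<bar> \<le> (real n * e r + real Od * real (m r)) / (real n * (real n - real Od))" for r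
  proof -
    have "e r \<ge> 0" unfolding e_def by simp
    moreover have "0 \<le> real Od * real (m r)" by simp
    moreover have "0 \<le> real n * e r" using \<open>e r \<ge> 0\<close> by simp
    ultimately have num: "\<bar>real n * e r - real Od * real (m r)\<bar> \<le> real n * e r + real Od * real (m r)"
      unfolding abs_le_iff by (intro conjI; linarith)
    have pos: "real n * (real n - real Od) > 0" using npos nOd by simp
    have "\<bar>a r\<bar> = \<bar>real n * e r - real Od * real (m r)\<bar> / (real n * (real n - real Od))"
      unfolding aform abs_divide using pos by simp
    then show ?thesis using divide_right_mono[OF num less_imp_le[OF pos]] by simp
  qed
  have "(\<Sum>r\<in>A. a r * U r) = (\<Sum>r\<in>A. a r * (U r - B / 2))"
  proof -
    have "(\<Sum>r\<in>A. a r * (U r - B / 2)) = (\<Sum>r\<in>A. a r * U r) - (\<Sum>r\<in>A. a r) * (B / 2)"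
      by (simp add: right_diff_distrib sum_subtractf sum_distrib_right)
    then show ?thesis using sum_a by simp
  qed
  then have "\<bar>\<Sum>r\<in>A. a r * U r\<bar> \<le> (\<Sum>r\<in>A. \<bar>a r\<bar> * (B / 2))"
  proof -
    assume eq: "(\<Sum>r\<in>A. a r * U r) = (\<Sum>r\<in>A. a r * (U r - B / 2))"
    have "\<bar>\<Sum>r\<in>A. a r * (U r - B / 2)\<bar> \<le> (\<Sum>r\<in>A. \<bar>a r * (U r - B / 2)\<bar>)" by (rule sum_abs)
    also have "\<dots> \<le> (\<Sum>r\<in>A. \<bar>a r\<bar> * (B / 2))"
    proof (rule sum_mono)
      fix r assume "r \<in> A"
      then have u: "0 \<le> U r" "U r \<le> B" using Ub by auto
      then have "\<bar>U r - B / 2\<bar> \<le> B / 2" unfolding abs_le_iff by (intro conjI; linarith)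
      then show "\<bar>a r * (U r - B / 2)\<bar> \<le> \<bar>a r\<bar> * (B / 2)" unfolding abs_mult by (rule mult_left_mono) simp
    qed
    finally show ?thesis using eq by simp
  qed
  also have "\<dots> \<le> (\<Sum>r\<in>A. (real n * e r + real Od * real (m r)) / (real n * (real n - real Od)) * (B / 2))"
  proof (rule sum_mono)
    fix r assume "r \<in> A"
    then have "B \<ge> 0" using Ub by force
    show "\<bar>a r\<bar> * (B / 2) \<le> (real n * e r + real Od * real (m r)) / (real n * (real n - real Od)) * (B / 2)"
      by (rule mult_right_mono[OF abs_a]) (simp add: \<open>B \<ge> 0\<close>)
  qed
  also have "\<dots> = (real n * real Od + real Od * real n) / (real n * (real n - real Od)) * (B / 2)"
    by (simp add: sum_distrib_right[symmetric] sum_divide_distrib[symmetric] sum.distrib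
        sum_distrib_left[symmetric] sum_e sum_m)
  also have "\<dots> = B * real Od / (real n - real Od)"
    using npos nOd by (simp add: field_simps)
  finally show ?thesis unfolding a_def D_def .
qed


lemma perm_comp_bij:
  fixes i j N :: nat
  assumes "i < N" "j < N"
  shows "bij_betw (\<lambda>p. p \<circ> Transposition.transpose i j) {p. p permutes {0..<N}} {p. p permutes {0..<N}}"
proof (rule bij_betw_byWitness[where f' = "\<lambda>p. p \<circ> Transposition.transpose i j"])
  show "\<forall>p\<in>{p. p permutes {0..<N}}. p \<circ> Transposition.transpose i j \<circ> Transposition.transpose i j = p"
    by (simp add: comp_assoc)
  show "\<forall>p\<in>{p. p permutes {0..<N}}. p \<circ> Transposition.transpose i j \<circ> Transposition.transpose i j = p"
    by (simp add: comp_assoc)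
  have t: "Transposition.transpose i j permutes {0..<N}" using assms by (intro permutes_swap_id) auto
  show "(\<lambda>p. p \<circ> Transposition.transpose i j) ` {p. p permutes {0..<N}} \<subseteq> {p. p permutes {0..<N}}"
    using permutes_compose[OF t] by auto
  show "(\<lambda>p. p \<circ> Transposition.transpose i j) ` {p. p permutes {0..<N}} \<subseteq> {p. p permutes {0..<N}}"
    using permutes_compose[OF t] by auto
qed

lemma perm_split:
  fixes p :: "nat \<Rightarrow> nat" and n N :: nat
  assumes p: "p permutes {0..<N}" and nN: "n \<le> N"
  shows "{0..<N} - p ` {0..<n} = p ` {n..<N}" "p ` {0..<n} \<subseteq> {0..<N}"
    "card (p ` {0..<n}) = n" "inj_on p A"
proof -
  have inj: "inj p" using permutes_inj[OF p] .
  have im: "p ` {0..<N} = {0..<N}" using permutes_image[OF p] .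
  have u: "{0..<N} = {0..<n} \<union> {n..<N}" using nN by auto
  have "p ` {0..<N} = p ` {0..<n} \<union> p ` {n..<N}" using u by auto
  moreover have "p ` {0..<n} \<inter> p ` {n..<N} = {}" using inj by (auto simp: inj_eq[OF inj])
  ultimately show "{0..<N} - p ` {0..<n} = p ` {n..<N}" using im by auto
  show "p ` {0..<n} \<subseteq> {0..<N}" using im u by auto
  show "card (p ` {0..<n}) = n" using inj by (simp add: card_image inj_on_subset)
  show "inj_on p A" using inj inj_on_subset by blast
qed

lemma img_swap:
  fixes p :: "nat \<Rightarrow> nat" and n N i j :: nat
  assumes p: "p permutes {0..<N}" and i: "i < n" and j: "n \<le> j" "j < N"
  shows "(p \<circ> Transposition.transpose i j) ` {0..<n} = insert (p j) (p ` {0..<n} - {p i})"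
proof -
  have "Transposition.transpose i j ` {0..<n} = insert j ({0..<n} - {i})"
  proof
    show "Transposition.transpose i j ` {0..<n} \<subseteq> insert j ({0..<n} - {i})"
      using i j by (auto simp: Transposition.transpose_def)
    show "insert j ({0..<n} - {i}) \<subseteq> Transposition.transpose i j ` {0..<n}"
    proof
      fix z assume z: "z \<in> insert j ({0..<n} - {i})"
      show "z \<in> Transposition.transpose i j ` {0..<n}"
      proof (cases "z = j")
        case True
        then have "z = Transposition.transpose i j i" by simp
        moreover have "i \<in> {0..<n}" using i by simp
        ultimately show ?thesis by blast
      next
        case False
        then have "z \<in> {0..<n}" "z \<noteq> i" using z by auto
        moreover have "z \<noteq> j" using \<open>z \<in> {0..<n}\<close> j by auto
        ultimately have "z = Transposition.transpose i j z" by simp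
        then show ?thesis using \<open>z \<in> {0..<n}\<close> by blast
      qed
    qed
  qed
  moreover have "(p \<circ> Transposition.transpose i j) ` {0..<n} = p ` (Transposition.transpose i j ` {0..<n})"
    by (rule image_comp[symmetric])
  ultimately have "(p \<circ> Transposition.transpose i j) ` {0..<n} = p ` insert j ({0..<n} - {i})"
    by simp
  also have "\<dots> = insert (p j) (p ` {0..<n} - {p i})"
    using permutes_inj[OF p] i by (auto simp: inj_def)
  finally show ?thesis .
qed

lemma sym_sum:
  fixes H :: "nat set \<Rightarrow> nat \<Rightarrow> nat \<Rightarrow> real" and n N :: nat
  assumes nN: "n \<le> N"
  shows "(\<Sum>p\<in>{p. p permutes {0..<N}}. \<Sum>x\<in>p ` {0..<n}. \<Sum>y\<in>{0..<N} - p ` {0..<n}. H (p ` {0..<n}) x y)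
       = (\<Sum>p\<in>{p. p permutes {0..<N}}. \<Sum>x\<in>p ` {0..<n}. \<Sum>y\<in>{0..<N} - p ` {0..<n}.
            H (insert y (p ` {0..<n} - {x})) y x)"
proof -
  define Pi where "Pi = {p. p permutes {0..<N}}"
  have re: "(\<Sum>x\<in>p ` {0..<n}. \<Sum>y\<in>{0..<N} - p ` {0..<n}. G p x y)
      = (\<Sum>i\<in>{0..<n}. \<Sum>j\<in>{n..<N}. G p (p i) (p j))" if p: "p \<in> Pi" for p and G :: "(nat \<Rightarrow> nat) \<Rightarrow> nat \<Rightarrow> nat \<Rightarrow> real"
  proof -
    have pp: "p permutes {0..<N}" using p Pi_def by simp
    have ri: "sum g (p ` B) = (\<Sum>j\<in>B. g (p j))" for g :: "nat \<Rightarrow> real" and B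
      using sum.reindex[OF perm_split(4)[OF pp nN, of B], of g] by (simp add: comp_def)
    have "(\<Sum>x\<in>p ` {0..<n}. \<Sum>y\<in>{0..<N} - p ` {0..<n}. G p x y)
        = (\<Sum>x\<in>p ` {0..<n}. \<Sum>y\<in>p ` {n..<N}. G p x y)" using perm_split(1)[OF pp nN] by simp
    also have "\<dots> = (\<Sum>i\<in>{0..<n}. \<Sum>y\<in>p ` {n..<N}. G p (p i) y)"
      by (rule ri)
    also have "\<dots> = (\<Sum>i\<in>{0..<n}. \<Sum>j\<in>{n..<N}. G p (p i) (p j))"
      by (rule sum.cong[OF refl], rule ri)
    finally show ?thesis .
  qed
  have "(\<Sum>p\<in>Pi. \<Sum>x\<in>p ` {0..<n}. \<Sum>y\<in>{0..<N} - p ` {0..<n}. H (p ` {0..<n}) x y)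
      = (\<Sum>p\<in>Pi. \<Sum>i\<in>{0..<n}. \<Sum>j\<in>{n..<N}. H (p ` {0..<n}) (p i) (p j))"
    by (rule sum.cong[OF refl], rule re[of _ "\<lambda>p x y. H (p ` {0..<n}) x y"], assumption)
  also have "\<dots> = (\<Sum>i\<in>{0..<n}. \<Sum>j\<in>{n..<N}. \<Sum>p\<in>Pi. H (p ` {0..<n}) (p i) (p j))"
    by (simp add: sum.swap[of _ Pi] sum.swap[of _ Pi "{n..<N}"])
  also have "\<dots> = (\<Sum>i\<in>{0..<n}. \<Sum>j\<in>{n..<N}. \<Sum>p\<in>Pi.
        H (insert (p j) (p ` {0..<n} - {p i})) (p j) (p i))"
  proof (rule sum.cong[OF refl], rule sum.cong[OF refl])
    fix i j assume i: "i \<in> {0..<n}" and j: "j \<in> {n..<N}"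
    have bij: "bij_betw (\<lambda>p. p \<circ> Transposition.transpose i j) Pi Pi"
      unfolding Pi_def using perm_comp_bij i j nN by auto
    have "(\<Sum>p\<in>Pi. H (p ` {0..<n}) (p i) (p j)) =
        (\<Sum>p\<in>Pi. H ((p \<circ> Transposition.transpose i j) ` {0..<n})
            ((p \<circ> Transposition.transpose i j) i) ((p \<circ> Transposition.transpose i j) j))"
      using sum.reindex_bij_betw[OF bij, of "\<lambda>p. H (p ` {0..<n}) (p i) (p j)"] by simp
    also have "\<dots> = (\<Sum>p\<in>Pi. H (insert (p j) (p ` {0..<n} - {p i})) (p j) (p i))"
    proof (rule sum.cong[OF refl])
      fix p assume "p \<in> Pi"
      then have pp: "p permutes {0..<N}" unfolding Pi_def by simp
      show "H ((p \<circ> Transposition.transpose i j) ` {0..<n}) ((p \<circ> Transposition.transpose i j) i)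
            ((p \<circ> Transposition.transpose i j) j) = H (insert (p j) (p ` {0..<n} - {p i})) (p j) (p i)"
        using img_swap[OF pp, of i n j] i j by simp
    qed
    finally show "(\<Sum>p\<in>Pi. H (p ` {0..<n}) (p i) (p j)) =
        (\<Sum>p\<in>Pi. H (insert (p j) (p ` {0..<n} - {p i})) (p j) (p i))" .
  qed
  also have "\<dots> = (\<Sum>p\<in>Pi. \<Sum>i\<in>{0..<n}. \<Sum>j\<in>{n..<N}. H (insert (p j) (p ` {0..<n} - {p i})) (p j) (p i))"
    by (simp add: sum.swap[of _ Pi] sum.swap[of _ Pi "{n..<N}"])
  also have "\<dots> = (\<Sum>p\<in>Pi. \<Sum>x\<in>p ` {0..<n}. \<Sum>y\<in>{0..<N} - p ` {0..<n}. H (insert y (p ` {0..<n} - {x})) y x)"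
    by (rule sum.cong[OF refl], rule re[of _ "\<lambda>p x y. H (insert y (p ` {0..<n} - {x})) y x", symmetric], assumption)
  finally show ?thesis unfolding Pi_def .
qed


lemma final_arith:
  fixes n N k R Od Tw B w l e :: real
  assumes B0: "B \<ge> 0" and R2: "2 \<le> R" and Rn: "R < n" and kn: "(k+2)*n \<le> 2*N" and k0: "k \<ge> 0"
    and OT: "Od + Tw \<le> R" and Od0: "Od \<ge> 0" and Tw0: "Tw \<ge> 0"
    and cases: "Tw \<le> R - 2 \<or> (Tw = R - 1 \<and> Od = 0) \<or> (Tw = R \<and> Od = 0 \<and> n = 2*R)"
    and w: "\<bar>w\<bar> \<le> B*Od/(n - Od)" and l0: "0 \<le> l" and l1: "l \<le> 2*B*Tw*(N - n)"
    and e: "\<bar>e\<bar> \<le> n*B*k"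
  shows "\<bar>w - (l + e)/(n*N)\<bar> \<le> 2*B*R/(n - R)"
proof -
  have npos: "n > 0" using R2 Rn by simp
  have nR: "n - R > 0" using Rn by simp
  have "(k+2)*n > 0" using k0 npos by simp
  then have Npos: "N > 0" using kn by linarith
  have "2*n \<le> (k+2)*n" using k0 npos by (intro mult_right_mono) auto
  then have nN: "n \<le> N" using kn by linarith
  have nNpos: "n*N > 0" using npos Npos by simp
  have F1: "\<bar>w\<bar> \<le> B*Od/(n - R)"
  proof -
    have "B*Od/(n - Od) \<le> B*Od/(n - R)"
      using B0 Od0 nR OT Tw0 by (intro divide_left_mono) (auto intro: mult_nonneg_nonneg)
    then show ?thesis using w by linarith
  qed
  have F2: "\<bar>e/(n*N)\<bar> \<le> B*k/N"
  proof -
    have "\<bar>e/(n*N)\<bar> = \<bar>e\<bar>/(n*N)" using nNpos by (simp add: abs_divide)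
    also have "\<dots> \<le> (n*B*k)/(n*N)" by (rule divide_right_mono[OF e]) (use nNpos in simp)
    also have "\<dots> = B*k/N" using npos Npos by (simp add: field_simps)
    finally show ?thesis .
  qed
  have F2b: "B*k/N \<le> 2*B/n"
  proof -
    have h1: "(k+2)*n = k*n + 2*n" by (simp add: algebra_simps)
    have "k*n \<le> 2*N" using h1 kn npos by linarith
    then have "B*k*n \<le> B*(2*N)" using B0 by (metis mult.assoc mult_left_mono)
    then show ?thesis using npos Npos by (simp add: field_simps)
  qed
  have F4: "2*B/n \<le> B*R/(n-R)"
  proof -
    have h: "0 \<le> (R-2)*n" using R2 npos by simp
    have "(R-2)*n = R*n - 2*n" by (simp add: algebra_simps)
    moreover have "2*(n-R) = 2*n - 2*R" by simp
    ultimately have "2*(n-R) \<le> R*n" using h R2 by linarith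
    then have "B*(2*(n-R)) \<le> B*(R*n)" using B0 by (rule mult_left_mono)
    then show ?thesis using npos nR by (simp add: field_simps)
  qed
  have F3: "l/(n*N) \<le> 2*B*Tw*(N-n)/(n*N)" using l1 nNpos by (simp add: divide_right_mono)
  have F3a: "2*B*Tw*(N-n)/(n*N) \<le> 2*B*Tw/n"
  proof -
    have "2*B*Tw*(N-n) \<le> 2*B*Tw*N" using B0 Tw0 npos by (simp add: mult_left_mono)
    then have "2*B*Tw*(N-n)/(n*N) \<le> 2*B*Tw*N/(n*N)" by (rule divide_right_mono) (use nNpos in simp)
    also have "2*B*Tw*N/(n*N) = 2*B*Tw/n" using Npos npos by (simp add: field_simps)
    finally show ?thesis .
  qed
  have F3b: "0 \<le> l/(n*N)" using l0 nNpos by simp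
  have up: "w - (l + e)/(n*N) \<le> 2*B*R/(n - R)"
  proof -
    have "B*Od/(n - R) \<le> B*R/(n-R)" using B0 OT Tw0 nR by (intro divide_right_mono mult_left_mono) auto
    moreover have "(l + e)/(n*N) = l/(n*N) + e/(n*N)" by (simp add: add_divide_distrib)
    moreover have "2*B*R/(n - R) = B*R/(n-R) + B*R/(n-R)" by (simp add: field_simps)
    moreover have "w \<le> \<bar>w\<bar>" "- (e/(n*N)) \<le> \<bar>e/(n*N)\<bar>" by (rule abs_ge_self, rule abs_ge_minus_self)
    ultimately show ?thesis using F1 F2 F2b F4 F3b by linarith
  qed
  have lo: "(l + e)/(n*N) - w \<le> 2*B*R/(n - R)"
  proof -
    have sp: "(l + e)/(n*N) = l/(n*N) + e/(n*N)" by (simp add: add_divide_distrib)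
    consider (a) "Tw \<le> R - 2" | (b) "Tw = R - 1" "Od = 0" | (c) "Tw = R" "Od = 0" "n = 2*R" using cases by blast
    then show ?thesis
    proof cases
      case a
      have "B*Od/(n - R) \<le> B*(R - Tw)/(n-R)" using B0 OT nR by (intro divide_right_mono mult_left_mono) auto
      moreover have "2*B*Tw/n \<le> 2*B*Tw/(n-R)" using B0 Tw0 nR npos Rn R2
        by (intro divide_left_mono) (auto intro: mult_nonneg_nonneg)
      moreover have "2*B/n \<le> 2*B/(n-R)" using B0 nR npos R2 by (intro divide_left_mono) auto
      moreover have "B*(R - Tw)/(n-R) + 2*B*Tw/(n-R) + 2*B/(n-R) = B*(R + Tw + 2)/(n-R)"
      proof -
        have "(B*(R-Tw) + 2*B*Tw + 2*B)/(n-R) = B*(R-Tw)/(n-R) + 2*B*Tw/(n-R) + 2*B/(n-R)"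
          by (simp add: add_divide_distrib)
        moreover have "B*(R-Tw) + 2*B*Tw + 2*B = B*(R+Tw+2)" by (simp add: algebra_simps)
        ultimately show ?thesis by simp
      qed
      moreover have "B*(R + Tw + 2)/(n-R) \<le> 2*B*R/(n-R)"
      proof -
        have "B*(R + Tw + 2) \<le> B*(2*R)" by (rule mult_left_mono) (use a B0 in auto)
        then show ?thesis using nR by (simp add: divide_right_mono)
      qed
      moreover have "- w \<le> \<bar>w\<bar>" "e/(n*N) \<le> \<bar>e/(n*N)\<bar>" by (rule abs_ge_minus_self, rule abs_ge_self)
      ultimately show ?thesis using F1 F2 F2b F3 F3a sp by linarith
    next
      case b
      have w0: "w = 0" using w b B0 by simp
      have "2*B*Tw/n + 2*B/n = 2*B*(Tw+1)/n" using npos by (simp add: field_simps)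
      moreover have "Tw + 1 = R" using b by simp
      ultimately have "2*B*Tw/n + 2*B/n = 2*B*R/n" by simp
      moreover have "2*B*R/n \<le> 2*B*R/(n-R)" using B0 R2 nR npos by (intro divide_left_mono) auto
      moreover have "e/(n*N) \<le> \<bar>e/(n*N)\<bar>" by (rule abs_ge_self)
      ultimately show ?thesis using w0 F2 F2b F3 F3a sp by linarith
    next
      case c
      have w0: "w = 0" using w c B0 by simp
      have R0: "R > 0" using R2 by simp
      have r1: "2*B*R/(n - R) = 2*B" using c R0 by simp
      have "2*B*Tw*(N-n)/(n*N) = B*(N-n)/N" using c R0 Npos by (simp add: field_simps)
      also have "\<dots> \<le> B*N/N" using B0 npos Npos by (intro divide_right_mono mult_left_mono) auto
      also have "\<dots> = B" using Npos by simp
      finally have l2: "l/(n*N) \<le> B" using F3 by linarith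
      have h1: "(k+2)*n = k*n + 2*n" by (simp add: algebra_simps)
      have h2: "k*n \<le> 2*N" using h1 kn npos by linarith
      have h3: "0 \<le> k*(n-2)" using k0 c R2 by simp
      have h4: "k*(n-2) = k*n - 2*k" by (simp add: algebra_simps)
      have "2*k \<le> k*n" using h3 h4 by linarith
      with h2 have "k \<le> N" by linarith
      then have "B*k/N \<le> B*N/N" using B0 Npos by (intro divide_right_mono mult_left_mono) auto
      then have "B*k/N \<le> B" using Npos by simp
      moreover have "e/(n*N) \<le> \<bar>e/(n*N)\<bar>" by (rule abs_ge_self)
      ultimately show ?thesis using l2 F2 sp w0 r1 by linarith
    qed
  qed
  show ?thesis using up lo by (simp add: abs_le_iff)
qed


lemma sum_by_class:
  fixes G :: "nat \<Rightarrow> real"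
  assumes fI: "finite I" and Yr: "Y ` I \<subseteq> {1..R}"
  shows "(\<Sum>x\<in>I. G (Y x)) = (\<Sum>r=1..R. real (card {z\<in>I. Y z = r}) * G r)"
proof -
  have "(\<Sum>x\<in>I. G (Y x)) = (\<Sum>r\<in>{1..R}. \<Sum>x\<in>{x\<in>I. Y x = r}. G (Y x))"
    using sum.group[OF fI _ Yr, of "\<lambda>x. G (Y x)"] by simp
  also have "\<dots> = (\<Sum>r\<in>{1..R}. \<Sum>x\<in>{x\<in>I. Y x = r}. G r)"
    by (rule sum.cong[OF refl], rule sum.cong[OF refl]) simp
  also have "\<dots> = (\<Sum>r=1..R. real (card {z\<in>I. Y z = r}) * G r)" by simp
  finally show ?thesis .
qed

lemma S2:
  fixes G :: "nat \<Rightarrow> real" and I :: "nat set"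
  assumes IN: "I \<subseteq> {0..<N}" and cI: "card I = n" and npos: "n > 0"
    and Yr: "\<And>j. j < N \<Longrightarrow> Y j \<in> {1..R}"
  shows "(\<Sum>r=1..R. (real (card {z\<in>I. Y z = r}) / real n - rho_hat N Y r) * G r)
     = (\<Sum>x\<in>I. \<Sum>y\<in>{0..<N} - I. G (Y x) - G (Y y)) / (real n * real N)"
proof -
  define Oc where "Oc = {0..<N} - I"
  have fI: "finite I" using IN finite_subset by blast
  have fO: "finite Oc" unfolding Oc_def by simp
  have "card I \<le> card {0..<N}" using IN by (intro card_mono) auto
  then have nN: "n \<le> N" using cI by simp
  have Npos: "N > 0" using nN npos by simp
  have cO: "card Oc = N - n" unfolding Oc_def using IN cI fI by (simp add: card_Diff_subset)
  have YI: "Y ` I \<subseteq> {1..R}" using IN Yr by auto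
  have YO: "Y ` Oc \<subseteq> {1..R}" unfolding Oc_def using Yr by auto
  have cls: "card {j. j < N \<and> Y j = r} = card {z\<in>I. Y z = r} + card {z\<in>Oc. Y z = r}" for r
  proof -
    have "{j. j < N \<and> Y j = r} = {z\<in>I. Y z = r} \<union> {z\<in>Oc. Y z = r}" unfolding Oc_def using IN by auto
    moreover have "{z\<in>I. Y z = r} \<inter> {z\<in>Oc. Y z = r} = {}" unfolding Oc_def by auto
    ultimately show ?thesis using fI fO by (simp add: card_Un_disjoint)
  qed
  have "(\<Sum>x\<in>I. \<Sum>y\<in>Oc. G (Y x) - G (Y y)) = real (card Oc) * (\<Sum>x\<in>I. G (Y x)) - real (card I) * (\<Sum>y\<in>Oc. G (Y y))"
    by (simp add: sum_subtractf sum_distrib_left)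
  also have "\<dots> = (\<Sum>r=1..R. (real (N - n) * real (card {z\<in>I. Y z = r}) - real n * real (card {z\<in>Oc. Y z = r})) * G r)"
    unfolding sum_by_class[OF fI YI] sum_by_class[OF fO YO] cO cI sum_distrib_left sum_subtractf[symmetric]
    by (rule sum.cong[OF refl]) (simp add: algebra_simps)
  also have "\<dots> = (\<Sum>r=1..R. (real N * real (card {z\<in>I. Y z = r}) - real n * real (card {j. j < N \<and> Y j = r})) * G r)"
  proof (rule sum.cong[OF refl])
    fix r
    have "real (N - n) = real N - real n" using nN by simp
    then show "(real (N - n) * real (card {z\<in>I. Y z = r}) - real n * real (card {z\<in>Oc. Y z = r})) * G r =
      (real N * real (card {z\<in>I. Y z = r}) - real n * real (card {j. j < N \<and> Y j = r})) * G r"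
      unfolding cls by (simp add: algebra_simps)
  qed
  finally have eq: "(\<Sum>x\<in>I. \<Sum>y\<in>Oc. G (Y x) - G (Y y)) =
     (\<Sum>r=1..R. (real N * real (card {z\<in>I. Y z = r}) - real n * real (card {j. j < N \<and> Y j = r})) * G r)" .
  have "(\<Sum>r=1..R. (real (card {z\<in>I. Y z = r}) / real n - rho_hat N Y r) * G r)
      = (\<Sum>r=1..R. (real N * real (card {z\<in>I. Y z = r}) - real n * real (card {j. j < N \<and> Y j = r})) * G r / (real n * real N))"
  proof (rule sum.cong[OF refl])
    fix r
    show "(real (card {z\<in>I. Y z = r}) / real n - rho_hat N Y r) * G r =
      (real N * real (card {z\<in>I. Y z = r}) - real n * real (card {j. j < N \<and> Y j = r})) * G r / (real n * real N)"
    proof -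
      have "real (card {z\<in>I. Y z = r}) / real n - real (card {j. j < N \<and> Y j = r}) / real N
          = (real N * real (card {z\<in>I. Y z = r}) - real n * real (card {j. j < N \<and> Y j = r})) / (real n * real N)"
        using npos Npos by (simp add: diff_divide_distrib)
      then show ?thesis unfolding rho_hat_def by simp
    qed
  qed
  also have "\<dots> = (\<Sum>x\<in>I. \<Sum>y\<in>Oc. G (Y x) - G (Y y)) / (real n * real N)"
    unfolding eq by (simp add: sum_divide_distrib)
  finally show ?thesis unfolding Oc_def .
qed


definition Gs :: "nat \<Rightarrow> nat \<Rightarrow> (nat \<Rightarrow> nat) \<Rightarrow> nat set \<Rightarrow> nat \<Rightarrow> (nat \<times> nat \<times> nat list) set" where
  "Gs N k Y I r = Om k {z\<in>I. Y z = r} ({0..<N} - I)"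

lemma Omega_r_pi_Gs: "Omega_r_pi N k Y p r = Gs N k Y (I_pi N k p) r"
  unfolding Omega_r_pi_def Gs_def Om_def by auto

lemma loo_class:
  fixes I :: "nat set" and Y :: "nat \<Rightarrow> nat" and R :: nat
  assumes IN: "I \<subseteq> {0..<N}" and YI: "Y ` I \<subseteq> {1..R}"
  shows "(\<Sum>x\<in>I. if Y x \<noteq> c then avg_loss phi f X (Om k {z\<in>I. Y z = Y x} ({0..<N} - I))
            - avg_loss phi f X (Om k ({z\<in>I. Y z = Y x} - {x}) ({0..<N} - I)) else 0)
     = (\<Sum>r=1..R. if r \<noteq> c then (if card {z\<in>I. Y z = r} = 2 then 2 * avg_loss phi f X (Om k {z\<in>I. Y z = r} ({0..<N} - I)) else 0) else 0)"
proof -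
  have fI: "finite I" using IN finite_subset by blast
  define h where "h x = (if Y x \<noteq> c then avg_loss phi f X (Om k {z\<in>I. Y z = Y x} ({0..<N} - I))
            - avg_loss phi f X (Om k ({z\<in>I. Y z = Y x} - {x}) ({0..<N} - I)) else 0)" for x
  have "(\<Sum>x\<in>I. h x) = (\<Sum>r\<in>{1..R}. \<Sum>x\<in>{x\<in>I. Y x = r}. h x)"
    using sum.group[OF fI _ YI, of h] by simp
  also have "\<dots> = (\<Sum>r=1..R. if r \<noteq> c then (if card {z\<in>I. Y z = r} = 2 then 2 * avg_loss phi f X (Om k {z\<in>I. Y z = r} ({0..<N} - I)) else 0) else 0)"
  proof (rule sum.cong[OF refl])
    fix r
    have "(\<Sum>x\<in>{x\<in>I. Y x = r}. h x) = (\<Sum>x\<in>{x\<in>I. Y x = r}. if r \<noteq> c then avg_loss phi f X (Om k {z\<in>I. Y z = r} ({0..<N} - I))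
            - avg_loss phi f X (Om k ({z\<in>I. Y z = r} - {x}) ({0..<N} - I)) else 0)"
      by (rule sum.cong[OF refl]) (simp add: h_def)
    also have "\<dots> = (if r \<noteq> c then (if card {z\<in>I. Y z = r} = 2 then 2 * avg_loss phi f X (Om k {z\<in>I. Y z = r} ({0..<N} - I)) else 0) else 0)"
    proof (cases "r \<noteq> c")
      case True
      have "finite {z\<in>I. Y z = r}" using fI by simp
      moreover have "{z\<in>I. Y z = r} \<inter> ({0..<N} - I) = {}" by auto
      ultimately show ?thesis using True loo[of "{z\<in>I. Y z = r}" "{0..<N} - I" phi f X k] by simp
    next
      case False
      then show ?thesis by simp
    qed
    finally show "(\<Sum>x\<in>{x\<in>I. Y x = r}. h x) = (if r \<noteq> c then (if card {z\<in>I. Y z = r} = 2 then 2 * avg_loss phi f X (Om k {z\<in>I. Y z = r} ({0..<N} - I)) else 0) else 0)" .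
  qed
  finally show ?thesis unfolding h_def .
qed

lemma loo_bounds:
  fixes R :: nat
  assumes Lb: "\<And>x xp xs. length xs = k \<Longrightarrow> 0 \<le> loss phi f x xp xs \<and> loss phi f x xp xs \<le> B"
  shows "0 \<le> (\<Sum>r=1..R. if r \<noteq> c then (if card (Pr r) = 2 then 2 * avg_loss phi f X (Om k (Pr r) Qc) else 0) else 0)
    \<and> (\<Sum>r=1..R. if r \<noteq> c then (if card (Pr r) = 2 then 2 * avg_loss phi f X (Om k (Pr r) Qc) else 0) else 0)
      \<le> 2 * B * real (card {r\<in>{1..R}. card (Pr r) = 2})"
proof -
  have b: "0 \<le> avg_loss phi f X (Om k P Q) \<and> avg_loss phi f X (Om k P Q) \<le> B" for P Q
    using U_bounds[OF Lb] .
  have B0: "0 \<le> B" using Lb[of "replicate k undefined" undefined undefined] by auto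
  have "(\<Sum>r=1..R. if r \<noteq> c then (if card (Pr r) = 2 then 2 * avg_loss phi f X (Om k (Pr r) Qc) else 0) else 0)
      \<le> (\<Sum>r=1..R. if card (Pr r) = 2 then 2 * B else 0)"
    by (rule sum_mono) (use b B0 in auto)
  also have "\<dots> = 2 * B * real (card {r\<in>{1..R}. card (Pr r) = 2})"
  proof -
    have "(\<Sum>r=1..R. if card (Pr r) = 2 then 2 * B else 0) = (\<Sum>r\<in>{r\<in>{1..R}. card (Pr r) = 2}. 2 * B)"
      by (rule sum.inter_filter[symmetric]) simp
    then show ?thesis by simp
  qed
  finally have up: "(\<Sum>r=1..R. if r \<noteq> c then (if card (Pr r) = 2 then 2 * avg_loss phi f X (Om k (Pr r) Qc) else 0) else 0)
      \<le> 2 * B * real (card {r\<in>{1..R}. card (Pr r) = 2})" .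
  have "0 \<le> (\<Sum>r=1..R. if r \<noteq> c then (if card (Pr r) = 2 then 2 * avg_loss phi f X (Om k (Pr r) Qc) else 0) else 0)"
    by (rule sum_nonneg) (use b in auto)
  with up show ?thesis by simp
qed


lemma n_facts: "n_aux N k \<le> N" "(k+2) * n_aux N k \<le> 2 * N" "even (n_aux N k)"
proof -
  have a: "(k+2) * (N div (k+2)) \<le> N" by (rule times_div_less_eq_dividend)
  have b: "2 * (N div (k+2)) \<le> (k+2) * (N div (k+2))" by (intro mult_right_mono) auto
  show "n_aux N k \<le> N" unfolding n_aux_def using a b by linarith
  show "(k+2) * n_aux N k \<le> 2 * N" unfolding n_aux_def using a by (simp add: algebra_simps)
  show "even (n_aux N k)" unfolding n_aux_def by simp
qed

lemma class_card:
  fixes Y :: "nat \<Rightarrow> nat" and R :: nat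
  assumes fI: "finite I" and YI: "Y ` I \<subseteq> {1..R}"
  shows "(\<Sum>r=1..R. card {z\<in>I. Y z = r}) = card I"
proof -
  have "(\<Sum>r\<in>{1..R}. \<Sum>x\<in>{x\<in>I. Y x = r}. (1::nat)) = (\<Sum>x\<in>I. 1)"
    using sum.group[OF fI _ YI, of "\<lambda>_. 1::nat"] by simp
  then show ?thesis by simp
qed

lemma count_facts:
  fixes m :: "nat \<Rightarrow> nat" and R n :: nat
  assumes n: "n = (\<Sum>r=1..R. m r)" and ev: "even n"
  defines "Od \<equiv> card {r\<in>{1..R}. odd (m r)}" and "Tw \<equiv> card {r\<in>{1..R}. m r = 2}"
  shows "Od + Tw \<le> R" "even Od" "Tw = R \<Longrightarrow> n = 2 * R"
proof -
  have d: "{r\<in>{1..R}. odd (m r)} \<inter> {r\<in>{1..R}. m r = 2} = {}" by auto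
  have "card ({r\<in>{1..R}. odd (m r)} \<union> {r\<in>{1..R}. m r = 2}) = Od + Tw"
    unfolding Od_def Tw_def using d by (simp add: card_Un_disjoint)
  moreover have "card ({r\<in>{1..R}. odd (m r)} \<union> {r\<in>{1..R}. m r = 2}) \<le> card {1..R}"
    by (intro card_mono) auto
  ultimately show "Od + Tw \<le> R" by simp
  have "n = 2 * (\<Sum>r\<in>{1..R}. m r div 2) + Od" unfolding n Od_def by (rule sum_mod2) simp
  then show "even Od" using ev by simp
  assume "Tw = R"
  then have "card {r\<in>{1..R}. m r = 2} = card {1..R}" unfolding Tw_def by simp
  then have "{r\<in>{1..R}. m r = 2} = {1..R}" by (intro card_subset_eq) auto
  then have "\<forall>r\<in>{1..R}. m r = 2" by auto
  then have "(\<Sum>r=1..R. m r) = (\<Sum>r=1..R. (2::nat))" by (intro sum.cong) auto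
  then show "n = 2 * R" unfolding n by simp
qed


lemma core:
  fixes phi :: "real list \<Rightarrow> real" and f :: "'x \<Rightarrow> 'v::euclidean_space" and X :: "nat \<Rightarrow> 'x"
    and N k R :: nat and Y :: "nat \<Rightarrow> nat" and B :: real
  assumes Lb: "\<And>x xp xs. length xs = k \<Longrightarrow> 0 \<le> loss phi f x xp xs \<and> loss phi f x xp xs \<le> B"
    and Yr: "\<And>j. j < N \<Longrightarrow> Y j \<in> {1..R}" and R2: "2 \<le> R" and nR: "R < n_aux N k"
  shows "\<bar>\<Sum>p\<in>{p. p permutes {0..<N}}. \<Sum>r=1..R. (rho_hat N Y r - omega_r_pi N k R Y p r) *
            avg_loss phi f X (Omega_r_pi N k Y p r)\<bar>
         \<le> fact N * (2 * B * real R / (real (n_aux N k) - real R))"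
proof -
  define n where "n = n_aux N k"
  define Pi where "Pi = {p. p permutes {0..<N}}"
  define GU where "GU I r = avg_loss phi f X (Gs N k Y I r)" for I r
  have B0: "0 \<le> B" using Lb[of "replicate k undefined" undefined undefined] by auto
  have nN: "n \<le> N" and kn: "(k+2) * n \<le> 2 * N" and ev: "even n" unfolding n_def using n_facts by auto
  have npos: "n > 0" using nR R2 n_def by simp
  have Npos: "N > 0" using npos nN by simp
  have Ub: "0 \<le> avg_loss phi f X (Om k P Q) \<and> avg_loss phi f X (Om k P Q) \<le> B" for P Q
    using U_bounds[OF Lb] .
  have pfacts: "p ` {0..<n} \<subseteq> {0..<N}" "card (p ` {0..<n}) = n" "finite (p ` {0..<n})"
      "Y ` (p ` {0..<n}) \<subseteq> {1..R}" if p: "p \<in> Pi" for p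
  proof -
    have pp: "p permutes {0..<N}" using p Pi_def by simp
    show s: "p ` {0..<n} \<subseteq> {0..<N}" using perm_split(2)[OF pp nN] .
    show "card (p ` {0..<n}) = n" using perm_split(3)[OF pp nN] .
    show "finite (p ` {0..<n})" by simp
    show "Y ` (p ` {0..<n}) \<subseteq> {1..R}" using s Yr by auto
  qed
  define K where "K p = (\<Sum>x\<in>p ` {0..<n}. \<Sum>y\<in>{0..<N} - p ` {0..<n}. GU (p ` {0..<n}) (Y x) - GU (p ` {0..<n}) (Y y))" for p
  define W where "W p = (\<Sum>r=1..R. (real (card {z\<in>p ` {0..<n}. Y z = r}) / real n - omega_r_pi N k R Y p r) * GU (p ` {0..<n}) r)" for p
  define LO where "LO p = (\<Sum>x\<in>p ` {0..<n}. \<Sum>y\<in>{0..<N} - p ` {0..<n}.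
      if Y x \<noteq> Y y then avg_loss phi f X (Om k {z\<in>p ` {0..<n}. Y z = Y x} ({0..<N} - p ` {0..<n}))
            - avg_loss phi f X (Om k ({z\<in>p ` {0..<n}. Y z = Y x} - {x}) ({0..<N} - p ` {0..<n})) else 0)" for p
  define NE where "NE p = (\<Sum>x\<in>p ` {0..<n}. \<Sum>y\<in>{0..<N} - p ` {0..<n}.
      if Y x \<noteq> Y y then avg_loss phi f X (Om k ({z\<in>p ` {0..<n}. Y z = Y x} - {x}) ({0..<N} - p ` {0..<n}))
            - avg_loss phi f X (Om k ({z\<in>p ` {0..<n}. Y z = Y x} - {x}) (insert x (({0..<N} - p ` {0..<n}) - {y}))) else 0)" for p
  have step1: "(\<Sum>r=1..R. (rho_hat N Y r - omega_r_pi N k R Y p r) * avg_loss phi f X (Omega_r_pi N k Y p r))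
      = W p - K p / (real n * real N)" if p: "p \<in> Pi" for p
  proof -
    have Ieq: "I_pi N k p = p ` {0..<n}" unfolding I_pi_def n_def ..
    have av: "avg_loss phi f X (Omega_r_pi N k Y p r) = GU (p ` {0..<n}) r" for r
      unfolding GU_def Omega_r_pi_Gs Ieq ..
    have s2: "(\<Sum>r=1..R. (real (card {z\<in>p ` {0..<n}. Y z = r}) / real n - rho_hat N Y r) * GU (p ` {0..<n}) r)
        = K p / (real n * real N)"
      unfolding K_def by (rule S2[OF pfacts(1)[OF p] pfacts(2)[OF p] npos Yr])
    have "(\<Sum>r=1..R. (rho_hat N Y r - omega_r_pi N k R Y p r) * GU (p ` {0..<n}) r)
        = (\<Sum>r=1..R. (real (card {z\<in>p ` {0..<n}. Y z = r}) / real n - omega_r_pi N k R Y p r) * GU (p ` {0..<n}) r)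
          - (\<Sum>r=1..R. (real (card {z\<in>p ` {0..<n}. Y z = r}) / real n - rho_hat N Y r) * GU (p ` {0..<n}) r)"
      by (simp add: sum_subtractf[symmetric] algebra_simps)
    then show ?thesis unfolding av s2 W_def by simp
  qed
  have Kdec: "K p = (\<Sum>x\<in>p ` {0..<n}. \<Sum>y\<in>{0..<N} - p ` {0..<n}. if Y x \<noteq> Y y then GU (p ` {0..<n}) (Y x) else 0)
      - (\<Sum>x\<in>p ` {0..<n}. \<Sum>y\<in>{0..<N} - p ` {0..<n}. if Y x \<noteq> Y y then GU (p ` {0..<n}) (Y y) else 0)" for p
    unfolding K_def sum_subtractf[symmetric]
    by (rule sum.cong[OF refl], rule sum.cong[OF refl]) auto
  have symm: "(\<Sum>p\<in>Pi. \<Sum>x\<in>p ` {0..<n}. \<Sum>y\<in>{0..<N} - p ` {0..<n}. if Y x \<noteq> Y y then GU (p ` {0..<n}) (Y y) else 0)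
      = (\<Sum>p\<in>Pi. \<Sum>x\<in>p ` {0..<n}. \<Sum>y\<in>{0..<N} - p ` {0..<n}.
           if Y y \<noteq> Y x then GU (insert y (p ` {0..<n} - {x})) (Y x) else 0)"
    unfolding Pi_def using sym_sum[OF nN, of "\<lambda>I x y. if Y x \<noteq> Y y then GU I (Y y) else 0"] by simp
  have pt: "(if Y x \<noteq> Y y then GU (p ` {0..<n}) (Y x) else 0) - (if Y y \<noteq> Y x then GU (insert y (p ` {0..<n} - {x})) (Y x) else 0)
      = (if Y x \<noteq> Y y then avg_loss phi f X (Om k {z\<in>p ` {0..<n}. Y z = Y x} ({0..<N} - p ` {0..<n}))
            - avg_loss phi f X (Om k ({z\<in>p ` {0..<n}. Y z = Y x} - {x}) ({0..<N} - p ` {0..<n})) else 0)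
        + (if Y x \<noteq> Y y then avg_loss phi f X (Om k ({z\<in>p ` {0..<n}. Y z = Y x} - {x}) ({0..<N} - p ` {0..<n}))
            - avg_loss phi f X (Om k ({z\<in>p ` {0..<n}. Y z = Y x} - {x}) (insert x (({0..<N} - p ` {0..<n}) - {y}))) else 0)"
    if p: "p \<in> Pi" and x: "x \<in> p ` {0..<n}" and y: "y \<in> {0..<N} - p ` {0..<n}" for p x y
  proof (cases "Y x \<noteq> Y y")
    case True
    have e1: "{z \<in> insert y (p ` {0..<n} - {x}). Y z = Y x} = {z\<in>p ` {0..<n}. Y z = Y x} - {x}"
      using True by auto
    have e2: "{0..<N} - insert y (p ` {0..<n} - {x}) = insert x (({0..<N} - p ` {0..<n}) - {y})"
      using x y pfacts(1)[OF p] by auto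
    have "GU (insert y (p ` {0..<n} - {x})) (Y x) =
        avg_loss phi f X (Om k ({z\<in>p ` {0..<n}. Y z = Y x} - {x}) (insert x (({0..<N} - p ` {0..<n}) - {y})))"
      unfolding GU_def Gs_def e1 e2 ..
    moreover have "GU (p ` {0..<n}) (Y x) = avg_loss phi f X (Om k {z\<in>p ` {0..<n}. Y z = Y x} ({0..<N} - p ` {0..<n}))"
      unfolding GU_def Gs_def ..
    ultimately show ?thesis using True by simp
  next
    case False
    then show ?thesis by simp
  qed
  have step2: "(\<Sum>p\<in>Pi. K p) = (\<Sum>p\<in>Pi. LO p + NE p)"
  proof -
    have "(\<Sum>p\<in>Pi. K p) = (\<Sum>p\<in>Pi. \<Sum>x\<in>p ` {0..<n}. \<Sum>y\<in>{0..<N} - p ` {0..<n}. if Y x \<noteq> Y y then GU (p ` {0..<n}) (Y x) else 0)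
      - (\<Sum>p\<in>Pi. \<Sum>x\<in>p ` {0..<n}. \<Sum>y\<in>{0..<N} - p ` {0..<n}. if Y x \<noteq> Y y then GU (p ` {0..<n}) (Y y) else 0)"
      unfolding Kdec by (simp add: sum_subtractf)
    also have "\<dots> = (\<Sum>p\<in>Pi. \<Sum>x\<in>p ` {0..<n}. \<Sum>y\<in>{0..<N} - p ` {0..<n}.
        (if Y x \<noteq> Y y then GU (p ` {0..<n}) (Y x) else 0) - (if Y y \<noteq> Y x then GU (insert y (p ` {0..<n} - {x})) (Y x) else 0))"
      unfolding symm by (simp add: sum_subtractf)
    also have "\<dots> = (\<Sum>p\<in>Pi. LO p + NE p)"
      unfolding LO_def NE_def sum.distrib[symmetric]
      by (rule sum.cong[OF refl], rule sum.cong[OF refl], rule sum.cong[OF refl], rule pt) auto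
    finally show ?thesis .
  qed
  have step3: "\<bar>W p - (LO p + NE p) / (real n * real N)\<bar> \<le> 2 * B * real R / (real n - real R)"
    if p: "p \<in> Pi" for p
  proof -
    define I where "I = p ` {0..<n}"
    define m where "m r = card {z\<in>I. Y z = r}" for r
    define Od where "Od = card {r\<in>{1..R}. odd (m r)}"
    define Tw where "Tw = card {r\<in>{1..R}. m r = 2}"
    have IN: "I \<subseteq> {0..<N}" and cI: "card I = n" and fI: "finite I" and YI: "Y ` I \<subseteq> {1..R}"
      unfolding I_def using pfacts[OF p] by auto
    have msum: "n = (\<Sum>r=1..R. m r)" unfolding m_def using class_card[OF fI YI] cI by simp
    have cf: "Od + Tw \<le> R" "even Od" "Tw = R \<Longrightarrow> n = 2 * R"
      unfolding Od_def Tw_def using count_facts[OF msum ev] by auto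
    have OdR: "Od < n" using cf(1) nR n_def by simp
    have om: "omega_r_pi N k R Y p r = real (m r div 2) / real (\<Sum>q=1..R. m q div 2)" for r
    proof -
      have nr: "n_r_pi N k Y p q = m q" for q unfolding n_r_pi_def m_def I_def I_pi_def n_def ..
      show ?thesis unfolding omega_r_pi_def Let_def nr by simp
    qed
    have Wb: "\<bar>W p\<bar> \<le> B * real Od / (real n - real Od)"
    proof -
      have "W p = (\<Sum>r\<in>{1..R}. (real (m r) / real n - real (m r div 2) / real (\<Sum>q\<in>{1..R}. m q div 2)) * GU I r)"
        unfolding W_def om m_def I_def ..
      also have "\<bar>\<dots>\<bar> \<le> B * real Od / (real n - real Od)"
        by (rule omega_part[OF _ msum Od_def OdR]) (auto simp: GU_def Gs_def Ub)
      finally show ?thesis .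
    qed
    have LOb: "0 \<le> LO p \<and> LO p \<le> 2 * B * real Tw * (real N - real n)"
    proof -
      have "LO p = (\<Sum>y\<in>{0..<N} - I. \<Sum>x\<in>I. if Y x \<noteq> Y y then avg_loss phi f X (Om k {z\<in>I. Y z = Y x} ({0..<N} - I))
            - avg_loss phi f X (Om k ({z\<in>I. Y z = Y x} - {x}) ({0..<N} - I)) else 0)"
        unfolding LO_def I_def by (rule sum.swap)
      also have "\<dots> = (\<Sum>y\<in>{0..<N} - I. \<Sum>r=1..R. if r \<noteq> Y y then (if card {z\<in>I. Y z = r} = 2 then 2 * avg_loss phi f X (Om k {z\<in>I. Y z = r} ({0..<N} - I)) else 0) else 0)"
        by (rule sum.cong[OF refl], rule loo_class[OF IN YI])
      finally have eq: "LO p = \<dots>" .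
      have each: "0 \<le> (\<Sum>r=1..R. if r \<noteq> Y y then (if card {z\<in>I. Y z = r} = 2 then 2 * avg_loss phi f X (Om k {z\<in>I. Y z = r} ({0..<N} - I)) else 0) else 0)
          \<and> (\<Sum>r=1..R. if r \<noteq> Y y then (if card {z\<in>I. Y z = r} = 2 then 2 * avg_loss phi f X (Om k {z\<in>I. Y z = r} ({0..<N} - I)) else 0) else 0)
          \<le> 2 * B * real Tw" for y
        unfolding Tw_def m_def using loo_bounds[OF Lb, where R=R and c="Y y" and Pr="\<lambda>r. {z\<in>I. Y z = r}" and Qc="{0..<N} - I" and X=X] by simp
      have cO: "card ({0..<N} - I) = N - n" using IN cI fI by (simp add: card_Diff_subset)
      have "LO p \<le> (\<Sum>y\<in>{0..<N} - I. 2 * B * real Tw)" unfolding eq by (rule sum_mono) (use each in blast)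
      also have "\<dots> = 2 * B * real Tw * (real N - real n)" using cO nN by (simp add: of_nat_diff)
      finally have up: "LO p \<le> 2 * B * real Tw * (real N - real n)" .
      have "0 \<le> LO p" unfolding eq by (rule sum_nonneg) (use each in blast)
      with up show ?thesis by simp
    qed
    have NEb: "\<bar>NE p\<bar> \<le> real n * B * real k"
    proof -
      have "\<bar>NE p\<bar> \<le> (\<Sum>x\<in>I. \<bar>\<Sum>y\<in>{0..<N} - I.
          if Y x \<noteq> Y y then avg_loss phi f X (Om k ({z\<in>I. Y z = Y x} - {x}) ({0..<N} - I))
            - avg_loss phi f X (Om k ({z\<in>I. Y z = Y x} - {x}) (insert x (({0..<N} - I) - {y}))) else 0\<bar>)"
        unfolding NE_def I_def by (rule sum_abs)
      also have "\<dots> \<le> (\<Sum>x\<in>I. B * real k)"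
      proof (rule sum_mono)
        fix x assume x: "x \<in> I"
        have "\<bar>\<Sum>y\<in>{0..<N} - I.
          if Y x \<noteq> Y y then avg_loss phi f X (Om k ({z\<in>I. Y z = Y x} - {x}) ({0..<N} - I))
            - avg_loss phi f X (Om k ({z\<in>I. Y z = Y x} - {x}) (insert x (({0..<N} - I) - {y}))) else 0\<bar>
          \<le> (\<Sum>y\<in>{0..<N} - I. \<bar>if Y x \<noteq> Y y then avg_loss phi f X (Om k ({z\<in>I. Y z = Y x} - {x}) ({0..<N} - I))
            - avg_loss phi f X (Om k ({z\<in>I. Y z = Y x} - {x}) (insert x (({0..<N} - I) - {y}))) else 0\<bar>)"
          by (rule sum_abs)
        also have "\<dots> \<le> (\<Sum>y\<in>{0..<N} - I. \<bar>avg_loss phi f X (Om k ({z\<in>I. Y z = Y x} - {x}) ({0..<N} - I))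
            - avg_loss phi f X (Om k ({z\<in>I. Y z = Y x} - {x}) (insert x (({0..<N} - I) - {y})))\<bar>)"
          by (rule sum_mono) simp
        also have "\<dots> \<le> B * real k"
        proof (rule neg_sum[OF Lb])
          show "finite ({z\<in>I. Y z = Y x} - {x})" using fI by simp
          show "finite ({0..<N} - I)" by simp
          show "({z\<in>I. Y z = Y x} - {x}) \<inter> ({0..<N} - I) = {}" by auto
          show "x \<notin> {z\<in>I. Y z = Y x} - {x}" by simp
          show "x \<notin> {0..<N} - I" using x by simp
        qed
        finally show "\<bar>\<Sum>y\<in>{0..<N} - I.
          if Y x \<noteq> Y y then avg_loss phi f X (Om k ({z\<in>I. Y z = Y x} - {x}) ({0..<N} - I))
            - avg_loss phi f X (Om k ({z\<in>I. Y z = Y x} - {x}) (insert x (({0..<N} - I) - {y}))) else 0\<bar> \<le> B * real k" .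
      qed
      also have "\<dots> = real n * B * real k" using cI by simp
      finally show ?thesis .
    qed
    have cases: "real Tw \<le> real R - 2 \<or> (real Tw = real R - 1 \<and> real Od = 0) \<or> (real Tw = real R \<and> real Od = 0 \<and> real n = 2 * real R)"
    proof -
      consider "Tw + 2 \<le> R" | "Tw + 1 = R" | "Tw = R" using cf(1) by linarith
      then show ?thesis
      proof cases
        case 1 then show ?thesis by simp
      next
        case 2
        then have "Od \<le> 1" using cf(1) by simp
        then have "Od = 0" using cf(2) by (cases Od) auto
        then show ?thesis using 2 by simp
      next
        case 3
        then have "Od = 0" using cf(1) by simp
        then show ?thesis using 3 cf(3) by simp
      qed
    qed
    have kn': "(real k + 2) * real n \<le> 2 * real N"
    proof -
      have "real ((k+2) * n) \<le> real (2 * N)" using kn by (simp only: of_nat_le_iff)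
      then show ?thesis by (simp add: algebra_simps)
    qed
    have OT: "real Od + real Tw \<le> real R" using cf(1) by simp
    show ?thesis
      by (rule final_arith[OF B0 _ _ kn' _ OT _ _ cases Wb]) (use R2 nR n_def LOb NEb in auto)
  qed
  have "(\<Sum>p\<in>Pi. \<Sum>r=1..R. (rho_hat N Y r - omega_r_pi N k R Y p r) * avg_loss phi f X (Omega_r_pi N k Y p r))
      = (\<Sum>p\<in>Pi. W p - (LO p + NE p) / (real n * real N))"
  proof -
    have "(\<Sum>p\<in>Pi. \<Sum>r=1..R. (rho_hat N Y r - omega_r_pi N k R Y p r) * avg_loss phi f X (Omega_r_pi N k Y p r))
        = (\<Sum>p\<in>Pi. W p - K p / (real n * real N))"
      by (rule sum.cong[OF refl], rule step1)
    also have "\<dots> = (\<Sum>p\<in>Pi. W p) - (\<Sum>p\<in>Pi. K p) / (real n * real N)"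
      by (simp add: sum_subtractf sum_divide_distrib)
    also have "\<dots> = (\<Sum>p\<in>Pi. W p) - (\<Sum>p\<in>Pi. LO p + NE p) / (real n * real N)"
      unfolding step2 ..
    also have "\<dots> = (\<Sum>p\<in>Pi. W p - (LO p + NE p) / (real n * real N))"
      by (simp add: sum_subtractf sum_divide_distrib)
    finally show ?thesis .
  qed
  also have "\<bar>\<dots>\<bar> \<le> (\<Sum>p\<in>Pi. \<bar>W p - (LO p + NE p) / (real n * real N)\<bar>)" by (rule sum_abs)
  also have "\<dots> \<le> (\<Sum>p\<in>Pi. 2 * B * real R / (real n - real R))" by (rule sum_mono) (rule step3)
  also have "\<dots> = fact N * (2 * B * real R / (real n - real R))"
  proof -
    have "card Pi = fact N" unfolding Pi_def by (rule card_permutations) simp_all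
    then show ?thesis by simp
  qed
  finally show ?thesis unfolding Pi_def n_def .
qed


lemma per_f:
  fixes phi :: "real list \<Rightarrow> real" and f :: "'x \<Rightarrow> 'v::euclidean_space" and X :: "nat \<Rightarrow> 'x"
    and N k R :: nat and Y :: "nat \<Rightarrow> nat" and B :: real
  assumes Lb: "\<And>x xp xs. length xs = k \<Longrightarrow> 0 \<le> loss phi f x xp xs \<and> loss phi f x xp xs \<le> B"
    and Yr: "\<And>j. j < N \<Longrightarrow> Y j \<in> {1..R}" and R2: "2 \<le> R" and nR: "R < n_aux N k"
  shows "\<bar>U_Omega phi f N k R X Y - U_bar phi f N k R X Y\<bar>
    \<le> 2 * B * real R / (real (n_aux N k) - real R)
      + (\<Sum>r=1..R. rho_hat N Y r * \<bar>avg_loss phi f X (Omega_r N k Y r) - U_perm_avg phi f N k X Y r\<bar>)"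
proof -
  define Pi where "Pi = {p. p permutes {0..<N}}"
  define c where "c = (1 / fact N :: real)"
  define V where "V p r = avg_loss phi f X (Omega_r_pi N k Y p r)" for p r
  define A where "A r = avg_loss phi f X (Omega_r N k Y r)" for r
  have cP: "card Pi = fact N" unfolding Pi_def by (rule card_permutations) simp_all
  have fP: "finite Pi" unfolding Pi_def by (rule finite_permutations) simp
  have c0: "c * fact N = 1" unfolding c_def by simp
  have Pr: "U_perm_avg phi f N k X Y r = c * (\<Sum>p\<in>Pi. V p r)" for r
    unfolding U_perm_avg_def c_def Pi_def V_def ..
  have Ub: "U_bar phi f N k R X Y = c * (\<Sum>p\<in>Pi. \<Sum>r=1..R. omega_r_pi N k R Y p r * V p r)"
    unfolding U_bar_def c_def Pi_def V_def ..
  have Uo: "U_Omega phi f N k R X Y = (\<Sum>r=1..R. rho_hat N Y r * A r)"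
    unfolding U_Omega_def A_def ..
  have dec: "U_Omega phi f N k R X Y - U_bar phi f N k R X Y
      = (\<Sum>r=1..R. rho_hat N Y r * (A r - U_perm_avg phi f N k X Y r))
        + c * (\<Sum>p\<in>Pi. \<Sum>r=1..R. (rho_hat N Y r - omega_r_pi N k R Y p r) * V p r)"
  proof -
    have "(\<Sum>r=1..R. rho_hat N Y r * U_perm_avg phi f N k X Y r) = c * (\<Sum>p\<in>Pi. \<Sum>r=1..R. rho_hat N Y r * V p r)"
      unfolding Pr by (simp add: sum_distrib_left sum.swap[of _ Pi] algebra_simps)
    moreover have "(\<Sum>p\<in>Pi. \<Sum>r=1..R. (rho_hat N Y r - omega_r_pi N k R Y p r) * V p r)
        = (\<Sum>p\<in>Pi. \<Sum>r=1..R. rho_hat N Y r * V p r) - (\<Sum>p\<in>Pi. \<Sum>r=1..R. omega_r_pi N k R Y p r * V p r)"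
      by (simp add: sum_subtractf[symmetric] algebra_simps)
    moreover have "(\<Sum>r=1..R. rho_hat N Y r * (A r - U_perm_avg phi f N k X Y r))
        = (\<Sum>r=1..R. rho_hat N Y r * A r) - (\<Sum>r=1..R. rho_hat N Y r * U_perm_avg phi f N k X Y r)"
      by (simp add: right_diff_distrib sum_subtractf)
    ultimately show ?thesis unfolding Uo Ub by (simp add: right_diff_distrib)
  qed
  have core': "\<bar>\<Sum>p\<in>Pi. \<Sum>r=1..R. (rho_hat N Y r - omega_r_pi N k R Y p r) * V p r\<bar>
      \<le> fact N * (2 * B * real R / (real (n_aux N k) - real R))"
    unfolding Pi_def V_def by (rule core[OF Lb Yr R2 nR])
  have rho0: "rho_hat N Y r \<ge> 0" for r unfolding rho_hat_def by simp
  have "\<bar>U_Omega phi f N k R X Y - U_bar phi f N k R X Y\<bar>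
      \<le> \<bar>\<Sum>r=1..R. rho_hat N Y r * (A r - U_perm_avg phi f N k X Y r)\<bar>
        + \<bar>c * (\<Sum>p\<in>Pi. \<Sum>r=1..R. (rho_hat N Y r - omega_r_pi N k R Y p r) * V p r)\<bar>"
    unfolding dec by (rule abs_triangle_ineq)
  also have "\<bar>\<Sum>r=1..R. rho_hat N Y r * (A r - U_perm_avg phi f N k X Y r)\<bar>
      \<le> (\<Sum>r=1..R. rho_hat N Y r * \<bar>A r - U_perm_avg phi f N k X Y r\<bar>)"
  proof -
    have "\<bar>\<Sum>r=1..R. rho_hat N Y r * (A r - U_perm_avg phi f N k X Y r)\<bar>
        \<le> (\<Sum>r=1..R. \<bar>rho_hat N Y r * (A r - U_perm_avg phi f N k X Y r)\<bar>)" by (rule sum_abs)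
    also have "\<dots> = (\<Sum>r=1..R. rho_hat N Y r * \<bar>A r - U_perm_avg phi f N k X Y r\<bar>)"
      using rho0 by (simp add: abs_mult)
    finally show ?thesis .
  qed
  also have "\<bar>c * (\<Sum>p\<in>Pi. \<Sum>r=1..R. (rho_hat N Y r - omega_r_pi N k R Y p r) * V p r)\<bar>
      \<le> 2 * B * real R / (real (n_aux N k) - real R)"
  proof -
    have cpos: "c > 0" unfolding c_def by simp
    have "\<bar>c * (\<Sum>p\<in>Pi. \<Sum>r=1..R. (rho_hat N Y r - omega_r_pi N k R Y p r) * V p r)\<bar>
        = c * \<bar>\<Sum>p\<in>Pi. \<Sum>r=1..R. (rho_hat N Y r - omega_r_pi N k R Y p r) * V p r\<bar>"
      using cpos by (simp add: abs_mult)
    also have "\<dots> \<le> c * (fact N * (2 * B * real R / (real (n_aux N k) - real R)))"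
      by (rule mult_left_mono[OF core']) (use cpos in simp)
    also have "\<dots> = 2 * B * real R / (real (n_aux N k) - real R)"
      using c0 by (simp add: mult.assoc[symmetric])
    finally show ?thesis .
  qed
  finally show ?thesis unfolding A_def by simp
qed

lemma perm_avg_bounds:
  assumes Lb: "\<And>x xp xs. length xs = k \<Longrightarrow> 0 \<le> loss phi f x xp xs \<and> loss phi f x xp xs \<le> B"
  shows "\<bar>avg_loss phi f X (Omega_r N k Y r) - U_perm_avg phi f N k X Y r\<bar> \<le> 2 * B"
proof -
  have B0: "0 \<le> B" using Lb[of "replicate k undefined" undefined undefined] by auto
  have a1: "0 \<le> avg_loss phi f X (Omega_r N k Y r) \<and> avg_loss phi f X (Omega_r N k Y r) \<le> B"
    by (rule avg_bounds[OF _ B0]) (auto simp: Omega_r_def Lt_def Lb)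
  have a2: "0 \<le> avg_loss phi f X (Omega_r_pi N k Y p r) \<and> avg_loss phi f X (Omega_r_pi N k Y p r) \<le> B" for p
    by (rule avg_bounds[OF _ B0]) (auto simp: Omega_r_pi_def Lt_def Lb)
  have fP: "finite {p. p permutes {0..<N}}" by (rule finite_permutations) simp
  have cP: "card {p. p permutes {0..<N}} = fact N" by (rule card_permutations) simp_all
  have s1: "(\<Sum>p\<in>{p. p permutes {0..<N}}. avg_loss phi f X (Omega_r_pi N k Y p r)) \<le> fact N * B"
    using sum_bounded_above[of "{p. p permutes {0..<N}}" "\<lambda>p. avg_loss phi f X (Omega_r_pi N k Y p r)" B] a2 cP by auto
  have s0: "0 \<le> (\<Sum>p\<in>{p. p permutes {0..<N}}. avg_loss phi f X (Omega_r_pi N k Y p r))"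
    by (rule sum_nonneg) (use a2 in auto)
  have "U_perm_avg phi f N k X Y r \<le> B"
  proof -
    have "U_perm_avg phi f N k X Y r \<le> (1 / fact N) * (fact N * B)"
      unfolding U_perm_avg_def by (rule mult_left_mono[OF s1]) simp
    then show ?thesis by simp
  qed
  moreover have "0 \<le> U_perm_avg phi f N k X Y r" unfolding U_perm_avg_def using s0 by simp
  ultimately show ?thesis using a1 B0 by (simp add: abs_le_iff)
qed

theorem mainTheorem7:
  fixes F :: "('x \<Rightarrow> 'v::euclidean_space) set"
    and phi :: "real list \<Rightarrow> real"
    and N k R :: nat and B :: real
    and X :: "nat \<Rightarrow> 'x" and Y :: "nat \<Rightarrow> nat"
  assumes "R \<ge> 2" and "k \<ge> 1"
    and "F \<noteq> {}"
    and "\<And>v. length v = k \<Longrightarrow> phi v \<ge> 0"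
    and "\<And>f x xp xs. f \<in> F \<Longrightarrow> length xs = k \<Longrightarrow>
           0 \<le> loss phi f x xp xs \<and> loss phi f x xp xs \<le> B"
    and "\<And>j. j < N \<Longrightarrow> Y j \<in> {1..R}"
    and "n_aux N k > R"
  shows "(SUP f\<in>F. \<bar>U_Omega phi f N k R X Y - U_bar phi f N k R X Y\<bar>)
    \<le> 2 * B * real R / (real (n_aux N k) - real R)
      + (\<Sum>r=1..R. rho_hat N Y r *
           (SUP f\<in>F. \<bar>avg_loss phi f X (Omega_r N k Y r) - U_perm_avg phi f N k X Y r\<bar>))"
proof (rule cSUP_least)
  show "F \<noteq> {}" using assms(3) .
  fix f assume f: "f \<in> F"
  have Lb: "\<And>x xp xs. length xs = k \<Longrightarrow> 0 \<le> loss phi f x xp xs \<and> loss phi f x xp xs \<le> B"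
    using assms(5)[OF f] by blast
  have "\<bar>U_Omega phi f N k R X Y - U_bar phi f N k R X Y\<bar>
    \<le> 2 * B * real R / (real (n_aux N k) - real R)
      + (\<Sum>r=1..R. rho_hat N Y r * \<bar>avg_loss phi f X (Omega_r N k Y r) - U_perm_avg phi f N k X Y r\<bar>)"
    by (rule per_f[OF Lb assms(6) assms(1) assms(7)])
  also have "\<dots> \<le> 2 * B * real R / (real (n_aux N k) - real R)
      + (\<Sum>r=1..R. rho_hat N Y r *
           (SUP f\<in>F. \<bar>avg_loss phi f X (Omega_r N k Y r) - U_perm_avg phi f N k X Y r\<bar>))"
  proof -
    have "rho_hat N Y r * \<bar>avg_loss phi f X (Omega_r N k Y r) - U_perm_avg phi f N k X Y r\<bar>
        \<le> rho_hat N Y r * (SUP f\<in>F. \<bar>avg_loss phi f X (Omega_r N k Y r) - U_perm_avg phi f N k X Y r\<bar>)" for r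
    proof (rule mult_left_mono)
      show "0 \<le> rho_hat N Y r" unfolding rho_hat_def by simp
      have "bdd_above ((\<lambda>f. \<bar>avg_loss phi f X (Omega_r N k Y r) - U_perm_avg phi f N k X Y r\<bar>) ` F)"
      proof (rule bdd_aboveI2)
        fix g assume g: "g \<in> F"
        show "\<bar>avg_loss phi g X (Omega_r N k Y r) - U_perm_avg phi g N k X Y r\<bar> \<le> 2 * B"
          by (rule perm_avg_bounds) (use assms(5)[OF g] in blast)
      qed
      then show "\<bar>avg_loss phi f X (Omega_r N k Y r) - U_perm_avg phi f N k X Y r\<bar>
          \<le> (SUP f\<in>F. \<bar>avg_loss phi f X (Omega_r N k Y r) - U_perm_avg phi f N k X Y r\<bar>)"
        by (rule cSUP_upper[OF f])
    qed
    then show ?thesis by (intro add_left_mono sum_mono) auto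
  qed
  finally show "\<bar>U_Omega phi f N k R X Y - U_bar phi f N k R X Y\<bar>
    \<le> 2 * B * real R / (real (n_aux N k) - real R)
      + (\<Sum>r=1..R. rho_hat N Y r *
           (SUP f\<in>F. \<bar>avg_loss phi f X (Omega_r N k Y r) - U_perm_avg phi f N k X Y r\<bar>))" .
qed

end
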